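(* In the boundary-driven switching system, for every $x\in V=\{1,\dots,N\}$, $$\theta_0(x)=\sum_{\beta\in\{L,R\}}\sum_{j\in\{0,1\}}\hat p\big((x,0),(\beta,j)\big)\,\rho_{\beta,j},\qquad \theta_1(x)=\sum_{\beta\in\{L,R\}}\sum_{j\in\{0,1\}}\hat p\big((x,1),(\beta,j)\big)\,\rho_{\beta,j}.$$
   Context: Boundary-driven switching system: fix $\sigma\in\{-1,0,1\}$, $N\in\mathbb N$, $V=\{1,\dots,N\}$, $\epsilon\in[0,1]$, $\gamma>0$, and reservoir parameters $\rho_{L,0},\rho_{L,1},\rho_{R,0},\rho_{R,1}\ge0$ (in $[0,1]$ if $\sigma=-1$). Configurations are $\eta=(\eta_0(x),\eta_1(x))_{x\in V}$ with values in $\{0,1\}$ if $\sigma=-1$ and in $\mathbb N_0$ if $\sigma\in\{0,1\}$. Writing $\delta_{(x,i)}$ for one particle at site $x$ in layer $i$, the continuous-time Markov chain has transitions: for $x\in\{1,\dots,N-1\}$, $i\in\{0,1\}$, $\eta\to\eta-\delta_{(x,i)}+\delta_{(x+1,i)}$ at rate $\epsilon^i\eta_i(x)(1+\sigma\eta_i(x+1))$ and $\eta\to\eta-\delta_{(x+1,i)}+\delta_{(x,i)}$ at rate $\epsilon^i\eta_i(x+1)(1+\sigma\eta_i(x))$ ($\epsilon^0=1$); for $x\in V$, $\eta\to\eta-\delta_{(x,i)}+\delta_{(x,1-i)}$ at rate $\gamma\eta_i(x)(1+\sigma\eta_{1-i}(x))$; and for $i\in\{0,1\}$, $\eta\to\eta-\delta_{(1,i)}$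 at rate $\eta_i(1)(1+\sigma\rho_{L,i})$, $\eta\to\eta+\delta_{(1,i)}$ at rate $\rho_{L,i}(1+\sigma\eta_i(1))$, $\eta\to\eta-\delta_{(N,i)}$ at rate $\eta_i(N)(1+\sigma\rho_{R,i})$, $\eta\to\eta+\delta_{(N,i)}$ at rate $\rho_{R,i}(1+\sigma\eta_i(N))$. This chain has a unique stationary distribution $\mu_{stat}$, and $\theta_i(x):=\mathbb E_{\mu_{stat}}[\eta_i(x)]$ is the stationary microscopic profile. Absorption probabilities: consider the continuous-time Markov chain on $(V\times\{0,1\})\cup\{(L,0),(L,1),(R,0),(R,1)\}$ (the one-particle dual) in which the last four states are absorbing, and from $(x,0)$ it jumps to $(x\pm1,0)$ at rate $1$ each (whenever $x\pm1\in V$), from $(x,1)$ to $(x\pm1,1)$ at rate $\epsilon$ each (whenever $x\pm1\in V$), from $(x,i)$ to $(x,1-i)$ at rate $\gamma$, from $(1,i)$ to $(L,i)$ at rate $1$, and from $(N,i)$ to $(R,i)$ at rate $1$. $\hat p((x,i),(\beta,j))$ denotes the probability that this chain started at $(x,i)$ is eventually absorbed at $(\beta,j)$. *)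

theory Defs
  imports "HOL-Probability.Probability_Mass_Function"
begin

datatype side = L | R

text \<open>States of the one-particle dual: In x i is site x in layer i (x in 1..N, i in {0,1});
  Abs b j is the absorbing reservoir state (b,j).\<close>
datatype dstate = In nat nat | Abs side nat

fun drate :: "nat \<Rightarrow> real \<Rightarrow> real \<Rightarrow> dstate \<Rightarrow> dstate \<Rightarrow> real" where
  "drate N eps gam (In x i) t =
     (if t = In (x + 1) i \<and> x + 1 \<le> N then eps ^ i else 0)
   + (if t = In (x - 1) i \<and> 2 \<le> x then eps ^ i else 0)
   + (if t = In x (1 - i) then gam else 0)
   + (if t = Abs L i \<and> x = 1 then 1 else 0)
   + (if t = Abs R i \<and> x = N then 1 else 0)"
| "drate N eps gam (Abs b j) t = 0"

definition dtargets :: "nat \<Rightarrow> nat \<Rightarrow> dstate set" where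
  "dtargets x i = {In (x + 1) i, In (x - 1) i, In x (1 - i), Abs L i, Abs R i}"

definition dtot :: "nat \<Rightarrow> real \<Rightarrow> real \<Rightarrow> dstate \<Rightarrow> real" where
  "dtot N eps gam s = (case s of In x i \<Rightarrow> (\<Sum>t\<in>dtargets x i. drate N eps gam s t) | Abs b j \<Rightarrow> 0)"

text \<open>Probability that the dual chain started at s has been absorbed at tgt after at most n jumps
  (computed through its embedded jump chain).\<close>
fun habs :: "nat \<Rightarrow> real \<Rightarrow> real \<Rightarrow> nat \<Rightarrow> dstate \<Rightarrow> dstate \<Rightarrow> real" where
  "habs N eps gam 0 s tgt = (if s = tgt then 1 else 0)"
| "habs N eps gam (Suc n) (Abs b j) tgt = (if Abs b j = tgt then 1 else 0)"
| "habs N eps gam (Suc n) (In x i) tgt =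
     (\<Sum>t\<in>dtargets x i. drate N eps gam (In x i) t / dtot N eps gam (In x i) * habs N eps gam n t tgt)"

definition phat :: "nat \<Rightarrow> real \<Rightarrow> real \<Rightarrow> dstate \<Rightarrow> dstate \<Rightarrow> real" where
  "phat N eps gam s tgt = (SUP n. habs N eps gam n s tgt)"

text \<open>A configuration assigns to (x,i) the number of particles at site x in layer i.\<close>
type_synonym config = "nat \<times> nat \<Rightarrow> nat"

definition addp :: "nat \<times> nat \<Rightarrow> config \<Rightarrow> config" where
  "addp p \<eta> = \<eta>(p := \<eta> p + 1)"

definition remp :: "nat \<times> nat \<Rightarrow> config \<Rightarrow> config" where
  "remp p \<eta> = \<eta>(p := \<eta> p - 1)"

definition movep :: "nat \<times> nat \<Rightarrow> nat \<times> nat \<Rightarrow> config \<Rightarrow> config" where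
  "movep p q \<eta> = addp q (remp p \<eta>)"

definition statespace :: "int \<Rightarrow> nat \<Rightarrow> config set" where
  "statespace \<sigma> N = {\<eta>. (\<forall>x i. (x \<notin> {1..N} \<or> i \<notin> {0,1}) \<longrightarrow> \<eta> (x, i) = 0)
                         \<and> (\<sigma> = -1 \<longrightarrow> (\<forall>p. \<eta> p \<le> 1))}"

definition transitions ::
  "int \<Rightarrow> nat \<Rightarrow> real \<Rightarrow> real \<Rightarrow> (side \<Rightarrow> nat \<Rightarrow> real) \<Rightarrow> config \<Rightarrow> (real \<times> config) list" where
  "transitions \<sigma> N eps gam \<rho> \<eta> =
     concat (map (\<lambda>x. concat (map (\<lambda>i.
        [ (eps ^ i * real (\<eta> (x, i)) * (1 + of_int \<sigma> * real (\<eta> (x + 1, i))), movep (x, i) (x + 1, i) \<eta>),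
          (eps ^ i * real (\<eta> (x + 1, i)) * (1 + of_int \<sigma> * real (\<eta> (x, i))), movep (x + 1, i) (x, i) \<eta>) ])
        [0, 1])) [1..<N])
   @ concat (map (\<lambda>x. map (\<lambda>i.
        (gam * real (\<eta> (x, i)) * (1 + of_int \<sigma> * real (\<eta> (x, 1 - i))), movep (x, i) (x, 1 - i) \<eta>))
        [0, 1]) [1..<N + 1])
   @ concat (map (\<lambda>i.
        [ (real (\<eta> (1, i)) * (1 + of_int \<sigma> * \<rho> L i), remp (1, i) \<eta>),
          (\<rho> L i * (1 + of_int \<sigma> * real (\<eta> (1, i))), addp (1, i) \<eta>),
          (real (\<eta> (N, i)) * (1 + of_int \<sigma> * \<rho> R i), remp (N, i) \<eta>),
          (\<rho> R i * (1 + of_int \<sigma> * real (\<eta> (N, i))), addp (N, i) \<eta>) ])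
        [0, 1])"

definition qrate :: "int \<Rightarrow> nat \<Rightarrow> real \<Rightarrow> real \<Rightarrow> (side \<Rightarrow> nat \<Rightarrow> real) \<Rightarrow> config \<Rightarrow> config \<Rightarrow> real" where
  "qrate \<sigma> N eps gam \<rho> \<eta> \<zeta> =
     (if \<zeta> = \<eta> then 0 else sum_list (map fst (filter (\<lambda>rt. snd rt = \<zeta>) (transitions \<sigma> N eps gam \<rho> \<eta>))))"

definition exitrate :: "int \<Rightarrow> nat \<Rightarrow> real \<Rightarrow> real \<Rightarrow> (side \<Rightarrow> nat \<Rightarrow> real) \<Rightarrow> config \<Rightarrow> real" where
  "exitrate \<sigma> N eps gam \<rho> \<eta> =
     sum_list (map fst (filter (\<lambda>rt. snd rt \<noteq> \<eta>) (transitions \<sigma> N eps gam \<rho> \<eta>)))"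

text \<open>Stationary distribution: a probability distribution on the state space satisfying
  global balance (total inflow = total outflow at every state).\<close>
definition stationary ::
  "int \<Rightarrow> nat \<Rightarrow> real \<Rightarrow> real \<Rightarrow> (side \<Rightarrow> nat \<Rightarrow> real) \<Rightarrow> config pmf \<Rightarrow> bool" where
  "stationary \<sigma> N eps gam \<rho> \<mu> \<longleftrightarrow>
     set_pmf \<mu> \<subseteq> statespace \<sigma> N \<and>
     (\<forall>\<zeta>\<in>statespace \<sigma> N.
        (\<integral>\<^sup>+ \<eta>. ennreal (qrate \<sigma> N eps gam \<rho> \<eta> \<zeta>) \<partial>measure_pmf \<mu>)
          = ennreal (pmf \<mu> \<zeta> * exitrate \<sigma> N eps gam \<rho> \<zeta>))"

end

theory Submission
  imports Defs
begin

lemma drate_nonneg: "0 \<le> eps \<Longrightarrow> 0 \<le> gam \<Longrightarrow> 0 \<le> drate N eps gam s t"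
  by (cases s) auto

declare drate.simps[simp del]

lemma dtot_eq: "dtot N eps gam (In x i) = (\<Sum>t\<in>dtargets x i. drate N eps gam (In x i) t)"
  by (simp add: dtot_def)

lemma dtot_pos: assumes "0 \<le> eps" "0 < gam" shows "0 < dtot N eps gam (In x i)"
proof -
  have "drate N eps gam (In x i) (In x (1 - i)) \<le> dtot N eps gam (In x i)"
    unfolding dtot_eq
    by (rule member_le_sum) (auto simp: dtargets_def drate_nonneg assms less_imp_le)
  moreover have "gam \<le> drate N eps gam (In x i) (In x (1 - i))"
    using assms by (auto simp: zero_le_power drate.simps)
  ultimately show ?thesis using assms by linarith
qed

lemma habs_bounds:
  assumes "0 \<le> eps" "0 < gam"
  shows "0 \<le> habs N eps gam n s tgt \<and> habs N eps gam n s tgt \<le> 1"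
proof (induction n arbitrary: s)
  case 0 then show ?case by simp
next
  case (Suc n)
  show ?case
  proof (cases s)
    case (In x i)
    let ?d = "dtot N eps gam (In x i)"
    have dpos: "0 < ?d" using dtot_pos assms by blast
    have c: "0 \<le> drate N eps gam (In x i) t / ?d" for t
      by (rule divide_nonneg_pos[OF drate_nonneg[OF assms(1) less_imp_le[OF assms(2)]] dpos])
    have "(\<Sum>t\<in>dtargets x i. drate N eps gam (In x i) t / ?d * habs N eps gam n t tgt)
        \<le> (\<Sum>t\<in>dtargets x i. drate N eps gam (In x i) t / ?d)"
      by (rule sum_mono, rule mult_left_le[OF conjunct2[OF Suc.IH] c])
    also have "\<dots> = 1" using dpos by (simp add: sum_divide_distrib[symmetric] dtot_eq)
    finally show ?thesis using In Suc c by (auto intro!: sum_nonneg mult_nonneg_nonneg simp del: times_divide_eq_left)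
  next
    case (Abs b j) then show ?thesis by simp
  qed
qed

lemma habs_mono:
  assumes "0 \<le> eps" "0 < gam" "tgt = Abs b0 j0"
  shows "habs N eps gam n s tgt \<le> habs N eps gam (Suc n) s tgt"
proof (induction n arbitrary: s)
  case 0
  show ?case
  proof (cases s)
    case (In x i)
    have "0 \<le> habs N eps gam 1 s tgt" using habs_bounds[OF assms(1,2)] by blast
    then show ?thesis using In assms(3) by (simp del: habs.simps(3))
  next
    case (Abs b j) then show ?thesis by simp
  qed
next
  case (Suc n)
  show ?case
  proof (cases s)
    case (In x i)
    let ?d = "dtot N eps gam (In x i)"
    have dpos: "0 < ?d" using dtot_pos assms by blast
    have c: "0 \<le> drate N eps gam (In x i) t / ?d" for t
      by (rule divide_nonneg_pos[OF drate_nonneg[OF assms(1) less_imp_le[OF assms(2)]] dpos])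
    show ?thesis unfolding In habs.simps
      by (rule sum_mono, rule mult_left_mono[OF Suc.IH c])
  next
    case (Abs b j) then show ?thesis by simp
  qed
qed

lemma phat_lim:
  assumes "0 \<le> eps" "0 < gam" "tgt = Abs b0 j0"
  shows "(\<lambda>n. habs N eps gam n s tgt) \<longlonglongrightarrow> phat N eps gam s tgt"
  unfolding phat_def
proof (rule LIMSEQ_incseq_SUP)
  show "incseq (\<lambda>n. habs N eps gam n s tgt)" by (rule incseq_SucI) (rule habs_mono[OF assms])
  show "bdd_above (range (\<lambda>n. habs N eps gam n s tgt))"
    by (rule bdd_aboveI[where M=1]) (use habs_bounds[OF assms(1,2)] in auto)
qed

lemma phat_Abs: "phat N eps gam (Abs b j) tgt = (if Abs b j = tgt then 1 else 0)"
proof -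
  have "habs N eps gam n (Abs b j) tgt = (if Abs b j = tgt then 1 else 0)" for n
    by (cases n) auto
  then show ?thesis unfolding phat_def by simp
qed

lemma phat_In:
  assumes "0 \<le> eps" "0 < gam" "tgt = Abs b0 j0"
  shows "phat N eps gam (In x i) tgt =
    (\<Sum>t\<in>dtargets x i. drate N eps gam (In x i) t / dtot N eps gam (In x i) * phat N eps gam t tgt)"
proof -
  have "(\<lambda>n. habs N eps gam (Suc n) (In x i) tgt) \<longlonglongrightarrow> phat N eps gam (In x i) tgt"
    using phat_lim[OF assms] by (rule LIMSEQ_Suc)
  moreover have "(\<lambda>n. habs N eps gam (Suc n) (In x i) tgt) \<longlonglongrightarrow>
    (\<Sum>t\<in>dtargets x i. drate N eps gam (In x i) t / dtot N eps gam (In x i) * phat N eps gam t tgt)"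
    unfolding habs.simps
    by (intro tendsto_intros phat_lim[OF assms])
  ultimately show ?thesis by (rule LIMSEQ_unique)
qed

definition Aop :: "nat \<Rightarrow> real \<Rightarrow> real \<Rightarrow> (nat \<times> nat \<Rightarrow> real) \<Rightarrow> nat \<Rightarrow> nat \<Rightarrow> real" where
  "Aop N eps gam v x i = eps ^ i * (if x < N then v (x + 1, i) - v (x, i) else 0)
     + eps ^ i * (if 2 \<le> x then v (x - 1, i) - v (x, i) else 0)
     + gam * (v (x, 1 - i) - v (x, i))
     - (if x = 1 then v (x, i) else 0) - (if x = N then v (x, i) else 0)"

definition hh :: "nat \<Rightarrow> real \<Rightarrow> real \<Rightarrow> (side \<Rightarrow> nat \<Rightarrow> real) \<Rightarrow> nat \<times> nat \<Rightarrow> real" where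
  "hh N eps gam \<rho> p = (\<Sum>\<beta>\<in>{L, R}. \<Sum>j\<in>{0, 1}. phat N eps gam (In (fst p) (snd p)) (Abs \<beta> j) * \<rho> \<beta> j)"

lemma sum_dtargets:
  assumes "i \<in> {0, 1}"
  shows "(\<Sum>t\<in>dtargets x i. f t) = f (In (x + 1) i) + f (In (x - 1) i) + f (In x (1 - i)) + f (Abs L i) + f (Abs R i)"
  using assms by (auto simp: dtargets_def add.assoc)

lemma drate_vals:
  assumes "i \<in> {0, 1}"
  shows "drate N eps gam (In x i) (In (x + 1) i) = (if x < N then eps ^ i else 0)"
    "drate N eps gam (In x i) (In (x - 1) i) = (if 2 \<le> x then eps ^ i else 0)"
    "drate N eps gam (In x i) (In x (1 - i)) = gam"
    "drate N eps gam (In x i) (Abs L i) = (if x = 1 then 1 else 0)"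
    "drate N eps gam (In x i) (Abs R i) = (if x = N then 1 else 0)"
  using assms by (auto simp: drate.simps)

lemma sum3_swap:
  fixes c :: "'t \<Rightarrow> real"
  shows "(\<Sum>b\<in>B. \<Sum>j\<in>J. (\<Sum>t\<in>T. c t * p t b j) * r b j) = (\<Sum>t\<in>T. c t * (\<Sum>b\<in>B. \<Sum>j\<in>J. p t b j * r b j))"
proof -
  have "(\<Sum>b\<in>B. \<Sum>j\<in>J. (\<Sum>t\<in>T. c t * p t b j) * r b j) = (\<Sum>b\<in>B. \<Sum>j\<in>J. \<Sum>t\<in>T. c t * (p t b j * r b j))"
    by (simp add: sum_distrib_right mult.assoc)
  also have "\<dots> = (\<Sum>b\<in>B. \<Sum>t\<in>T. \<Sum>j\<in>J. c t * (p t b j * r b j))"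
    by (rule sum.cong[OF refl]) (rule sum.swap)
  also have "\<dots> = (\<Sum>t\<in>T. \<Sum>b\<in>B. \<Sum>j\<in>J. c t * (p t b j * r b j))"
    by (rule sum.swap)
  finally show ?thesis by (simp add: sum_distrib_left)
qed

lemma hh_eq:
  assumes "0 \<le> eps" "0 < gam" "i \<in> {0, 1}"
  shows "Aop N eps gam (hh N eps gam \<rho>) x i + (if x = 1 then \<rho> L i else 0) + (if x = N then \<rho> R i else 0) = 0"
proof -
  let ?d = "dtot N eps gam (In x i)"
  define H where "H t = (\<Sum>\<beta>\<in>{L, R}. \<Sum>j\<in>{0, 1::nat}. phat N eps gam t (Abs \<beta> j) * \<rho> \<beta> j)" for t
  have dpos: "0 < ?d" using dtot_pos assms by blast
  have "hh N eps gam \<rho> (x, i) = (\<Sum>\<beta>\<in>{L, R}. \<Sum>j\<in>{0, 1}.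
      (\<Sum>t\<in>dtargets x i. drate N eps gam (In x i) t / ?d * phat N eps gam t (Abs \<beta> j)) * \<rho> \<beta> j)"
    unfolding hh_def using phat_In[OF assms(1,2)] by simp
  also have "\<dots> = (\<Sum>t\<in>dtargets x i. drate N eps gam (In x i) t / ?d * H t)"
    unfolding H_def by (rule sum3_swap)
  finally have e1: "?d * hh N eps gam \<rho> (x, i) = (\<Sum>t\<in>dtargets x i. drate N eps gam (In x i) t * H t)"
    using dpos by (simp add: sum_distrib_left)
  have HIn: "H (In y k) = hh N eps gam \<rho> (y, k)" for y k by (simp add: H_def hh_def)
  have HAbs: "H (Abs b k) = \<rho> b k" if "k \<in> {0,1}" for b k
    using that by (cases b) (auto simp: H_def phat_Abs)
  define a where "a = (if x < N then eps ^ i else 0)"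
  define b where "b = (if 2 \<le> x then eps ^ i else 0)"
  define c1 where "c1 = (if x = 1 then 1 else (0::real))"
  define c2 where "c2 = (if x = N then 1 else (0::real))"
  have d: "?d = a + b + gam + c1 + c2"
    unfolding dtot_eq sum_dtargets[OF assms(3)] drate_vals[OF assms(3)] a_def b_def c1_def c2_def by simp
  have s: "(\<Sum>t\<in>dtargets x i. drate N eps gam (In x i) t * H t) =
     a * hh N eps gam \<rho> (x + 1, i) + b * hh N eps gam \<rho> (x - 1, i)
     + gam * hh N eps gam \<rho> (x, 1 - i) + c1 * \<rho> L i + c2 * \<rho> R i"
    unfolding sum_dtargets[OF assms(3)] drate_vals[OF assms(3)] HIn HAbs[OF assms(3)] a_def b_def c1_def c2_def by simp
  have A: "Aop N eps gam (hh N eps gam \<rho>) x i + (if x = 1 then \<rho> L i else 0) + (if x = N then \<rho> R i else 0)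
    = a * (hh N eps gam \<rho> (x + 1, i) - hh N eps gam \<rho> (x, i)) + b * (hh N eps gam \<rho> (x - 1, i) - hh N eps gam \<rho> (x, i))
     + gam * (hh N eps gam \<rho> (x, 1 - i) - hh N eps gam \<rho> (x, i)) - c1 * hh N eps gam \<rho> (x, i) - c2 * hh N eps gam \<rho> (x, i)
     + c1 * \<rho> L i + c2 * \<rho> R i"
    unfolding Aop_def a_def b_def c1_def c2_def by simp
  show ?thesis unfolding A using e1 unfolding d s by (simp add: algebra_simps)
qed


lemma max_principle:
  assumes N: "1 \<le> N" and eps: "0 \<le> eps" and gam: "0 < gam"
    and A: "\<And>x i. x \<in> {1..N} \<Longrightarrow> i \<in> {0, 1} \<Longrightarrow> Aop N eps gam u x i = 0"
  shows "\<And>x i. x \<in> {1..N} \<Longrightarrow> i \<in> {0, 1} \<Longrightarrow> u (x, i) \<le> 0"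
proof -
  define K where "K = {1..N} \<times> {0, 1::nat}"
  have fin: "finite K" and ne: "K \<noteq> {}" using N by (auto simp: K_def)
  define m where "m = Max (u ` K)"
  have ub: "u k \<le> m" if "k \<in> K" for k using fin that by (auto simp: m_def)
  have "m \<in> u ` K" unfolding m_def using fin ne by (intro Max_in) auto
  then obtain k0 where k0: "k0 \<in> K" "u k0 = m" by auto
  have "m \<le> 0"
  proof (rule ccontr)
    assume mpos: "\<not> m \<le> 0"
    have key: "x \<noteq> 1 \<and> u (x, 1 - i) = m \<and> (i = 0 \<and> 2 \<le> x \<longrightarrow> u (x - 1, 0) = m)"
      if xi: "x \<in> {1..N}" "i \<in> {0, 1}" "u (x, i) = m" for x i
    proof -
      define T1 where "T1 = eps ^ i * (if x < N then u (x + 1, i) - u (x, i) else 0)"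
      define T2 where "T2 = eps ^ i * (if 2 \<le> x then u (x - 1, i) - u (x, i) else 0)"
      define T3 where "T3 = gam * (u (x, 1 - i) - u (x, i))"
      define T4 where "T4 = (if x = 1 then u (x, i) else 0)"
      define T5 where "T5 = (if x = N then u (x, i) else 0)"
      have sum0: "T1 + T2 + T3 - T4 - T5 = 0" using A[OF xi(1,2)] unfolding Aop_def T1_def T2_def T3_def T4_def T5_def .
      have t1: "T1 \<le> 0" unfolding T1_def using xi ub[of "(x + 1, i)"] eps
        by (auto simp: K_def intro!: mult_nonneg_nonpos)
      have "2 \<le> x \<Longrightarrow> u (x - 1, i) \<le> m" using xi by (intro ub) (auto simp: K_def)
      then have "T2 \<le> 0" unfolding T2_def using xi eps
        by (auto intro!: mult_nonneg_nonpos)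
      moreover have "T3 \<le> 0" unfolding T3_def using xi ub[of "(x, 1 - i)"] gam
        by (auto simp: K_def intro!: mult_nonneg_nonpos)
      moreover have "0 \<le> T4" "0 \<le> T5" unfolding T4_def T5_def using xi mpos by auto
      ultimately have "T1 = 0" "T2 = 0" "T3 = 0" "T4 = 0" "T5 = 0" using sum0 t1 by linarith+
      then show ?thesis using xi mpos gam unfolding T2_def T3_def T4_def by (auto split: if_splits)
    qed
    obtain x0 i0 where x0: "x0 \<in> {1..N}" "i0 \<in> {0, 1}" "u (x0, i0) = m" using k0 unfolding K_def by blast
    have x00: "u (x0, 0) = m"
      using x0 key[OF x0] by auto
    have "\<forall>x. x \<in> {1..N} \<longrightarrow> u (x, 0) = m \<longrightarrow> False" 
    proof
      fix x show "x \<in> {1..N} \<longrightarrow> u (x, 0) = m \<longrightarrow> False"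
      proof (induction x)
        case 0 then show ?case by simp
      next
        case (Suc y)
        show ?case
        proof (intro impI)
          assume a: "Suc y \<in> {1..N}" "u (Suc y, 0) = m"
          from key[OF a(1) _ a(2)] have "Suc y \<noteq> 1" "2 \<le> Suc y \<longrightarrow> u (y, 0) = m" by auto
          then show False using Suc.IH a(1) by auto
        qed
      qed
    qed
    then show False using x0 x00 by blast
  qed
  then show "\<And>x i. x \<in> {1..N} \<Longrightarrow> i \<in> {0, 1} \<Longrightarrow> u (x, i) \<le> 0"
  proof -
    fix x i assume "x \<in> {1..N}" "(i::nat) \<in> {0, 1}"
    then have "u (x, i) \<le> m" by (intro ub) (auto simp: K_def)
    then show "u (x, i) \<le> 0" using \<open>m \<le> 0\<close> by linarith
  qed
qed

lemma uniqueness: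
  assumes N: "1 \<le> N" and eps: "0 \<le> eps" and gam: "0 < gam"
    and A: "\<And>x i. x \<in> {1..N} \<Longrightarrow> i \<in> {0, 1} \<Longrightarrow> Aop N eps gam u x i = 0"
    and x: "x \<in> {1..N}" "i \<in> {0, 1}"
  shows "u (x, i) = 0"
proof -
  have "u (x, i) \<le> 0" using max_principle[OF N eps gam A x] .
  moreover have "(\<lambda>k. - u k) (x, i) \<le> 0"
  proof (rule max_principle[OF N eps gam _ x])
    fix y :: nat and j :: nat assume "y \<in> {1..N}" "j \<in> {0, 1}"
    then have "Aop N eps gam u y j = 0" by (rule A)
    moreover have "Aop N eps gam (\<lambda>k. - u k) y j = - Aop N eps gam u y j"
      by (simp add: Aop_def algebra_simps)
    ultimately show "Aop N eps gam (\<lambda>k. - u k) y j = 0" by simp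
  qed
  ultimately show ?thesis by simp
qed


lemma sbp:
  fixes a c :: "nat \<Rightarrow> real"
  shows "(\<Sum>x\<in>{1..<N}. c x * (a x - a (x + 1)))
    = (\<Sum>x\<in>{1..N}. a x * ((if x < N then c x else 0) - (if 2 \<le> x then c (x - 1) else 0)))"
proof -
  have e1: "(\<Sum>x\<in>{1..N}. a x * (if x < N then c x else 0)) = (\<Sum>x\<in>{1..<N}. c x * a x)"
  proof -
    have "(\<Sum>x\<in>{1..N}. a x * (if x < N then c x else 0)) = (\<Sum>x\<in>{1..N}. if x \<in> {1..<N} then c x * a x else 0)"
      by (rule sum.cong) auto
    also have "\<dots> = (\<Sum>x\<in>{1..<N}. c x * a x)"
      by (subst sum.inter_restrict[symmetric]) (auto intro: sum.cong)
    finally show ?thesis .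
  qed
  have e2: "(\<Sum>x\<in>{1..N}. a x * (if 2 \<le> x then c (x - 1) else 0)) = (\<Sum>x\<in>{1..<N}. c x * a (x + 1))"
  proof -
    have "(\<Sum>x\<in>{1..N}. a x * (if 2 \<le> x then c (x - 1) else 0)) = (\<Sum>x\<in>{1..N}. if x \<in> {2..N} then a x * c (x - 1) else 0)"
      by (rule sum.cong) auto
    also have "\<dots> = (\<Sum>x\<in>{2..N}. a x * c (x - 1))"
      by (subst sum.inter_restrict[symmetric]) (auto intro: sum.cong)
    also have "\<dots> = (\<Sum>x\<in>{1..<N}. c x * a (x + 1))"
    proof (cases N)
      case 0 then show ?thesis by simp
    next
      case (Suc M)
      have "(\<Sum>x\<in>{2..N}. a x * c (x - 1)) = (\<Sum>x\<in>Suc ` {1..<N}. a x * c (x - 1))"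
        using Suc by (intro sum.cong) (auto simp: image_iff intro!: bexI[of _ "_ - 1"])
      also have "\<dots> = (\<Sum>x\<in>{1..<N}. c x * a (x + 1))"
        by (subst sum.reindex) (auto simp: mult.commute)
      finally show ?thesis .
    qed
    finally show ?thesis .
  qed
  have "(\<Sum>x\<in>{1..N}. a x * ((if x < N then c x else 0) - (if 2 \<le> x then c (x - 1) else 0)))
    = (\<Sum>x\<in>{1..N}. a x * (if x < N then c x else 0)) - (\<Sum>x\<in>{1..N}. a x * (if 2 \<le> x then c (x - 1) else 0))"
    by (simp only: right_diff_distrib sum_subtractf)
  also have "\<dots> = (\<Sum>x\<in>{1..<N}. c x * a x) - (\<Sum>x\<in>{1..<N}. c x * a (x + 1))" unfolding e1 e2 ..
  also have "\<dots> = (\<Sum>x\<in>{1..<N}. c x * (a x - a (x + 1)))"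
    by (simp only: right_diff_distrib sum_subtractf)
  finally show ?thesis by simp
qed

definition Eform :: "nat \<Rightarrow> real \<Rightarrow> real \<Rightarrow> (nat \<times> nat \<Rightarrow> real) \<Rightarrow> (nat \<times> nat \<Rightarrow> real) \<Rightarrow> real" where
  "Eform N eps gam v u =
     (\<Sum>x\<in>{1..<N}. (v (x + 1, 0) - v (x, 0)) * (u (x, 0) - u (x + 1, 0))
        + eps * ((v (x + 1, 1) - v (x, 1)) * (u (x, 1) - u (x + 1, 1))))
   + (\<Sum>x\<in>{1..N}. gam * ((v (x, 1) - v (x, 0)) * (u (x, 0) - u (x, 1))))
   - (v (1, 0) * u (1, 0) + v (1, 1) * u (1, 1) + v (N, 0) * u (N, 0) + v (N, 1) * u (N, 1))"

lemma Eform_sym: "Eform N eps gam v u = Eform N eps gam u v"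
  unfolding Eform_def by (simp add: algebra_simps)

lemma sum_if_at:
  fixes f g :: "nat \<Rightarrow> real"
  assumes "a \<in> A" "finite A"
  shows "(\<Sum>x\<in>A. f x * (if x = a then g x else 0)) = f a * g a"
proof -
  have "(\<Sum>x\<in>A. f x * (if x = a then g x else 0)) = (\<Sum>x\<in>A. if x = a then f x * g x else 0)"
    by (rule sum.cong) auto
  then show ?thesis using assms by simp
qed

lemma hop_sum:
  fixes v u :: "nat \<times> nat \<Rightarrow> real"
  shows "(\<Sum>x\<in>{1..<N}. (v (x + 1, i) - v (x, i)) * (u (x, i) - u (x + 1, i)))
   = (\<Sum>x\<in>{1..N}. u (x, i) * ((if x < N then v (x + 1, i) - v (x, i) else 0) + (if 2 \<le> x then v (x - 1, i) - v (x, i) else 0)))"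
  unfolding sbp[of "\<lambda>x. v (x + 1, i) - v (x, i)" "\<lambda>x. u (x, i)" N]
  by (rule sum.cong) auto

lemma vertex_form:
  fixes v u :: "nat \<times> nat \<Rightarrow> real"
  assumes N: "1 \<le> N"
  shows "Eform N eps gam v u = (\<Sum>x\<in>{1..N}. u (x, 0) * Aop N eps gam v x 0 + u (x, 1) * Aop N eps gam v x 1)"
proof -
  define H0 where "H0 = (\<Sum>x\<in>{1..N}. u (x, 0) * ((if x < N then v (x + 1, 0) - v (x, 0) else 0) + (if 2 \<le> x then v (x - 1, 0) - v (x, 0) else 0)))"
  define H1 where "H1 = (\<Sum>x\<in>{1..N}. u (x, 1) * ((if x < N then v (x + 1, 1) - v (x, 1) else 0) + (if 2 \<le> x then v (x - 1, 1) - v (x, 1) else 0)))"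
  define G where "G = (\<Sum>x\<in>{1..N}. gam * ((v (x, 1) - v (x, 0)) * (u (x, 0) - u (x, 1))))"
  define Bd where "Bd = (\<Sum>x\<in>{1..N}. u (x, 0) * (if x = 1 then v (x, 0) else 0) + u (x, 0) * (if x = N then v (x, 0) else 0)
      + u (x, 1) * (if x = 1 then v (x, 1) else 0) + u (x, 1) * (if x = N then v (x, 1) else 0))"
  have bd: "Bd = v (1, 0) * u (1, 0) + v (1, 1) * u (1, 1) + v (N, 0) * u (N, 0) + v (N, 1) * u (N, 1)"
    unfolding Bd_def sum.distrib using N by (simp add: sum_if_at algebra_simps)
  have l: "Eform N eps gam v u = H0 + eps * H1 + G - Bd"
    unfolding Eform_def H0_def H1_def G_def bd sum.distrib sum_distrib_left[symmetric] hop_sum ..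
  have r: "(\<Sum>x\<in>{1..N}. u (x, 0) * Aop N eps gam v x 0 + u (x, 1) * Aop N eps gam v x 1)
     = (\<Sum>x\<in>{1..N}. u (x, 0) * ((if x < N then v (x + 1, 0) - v (x, 0) else 0) + (if 2 \<le> x then v (x - 1, 0) - v (x, 0) else 0))
        + eps * (u (x, 1) * ((if x < N then v (x + 1, 1) - v (x, 1) else 0) + (if 2 \<le> x then v (x - 1, 1) - v (x, 1) else 0)))
        + gam * ((v (x, 1) - v (x, 0)) * (u (x, 0) - u (x, 1)))
        - (u (x, 0) * (if x = 1 then v (x, 0) else 0) + u (x, 0) * (if x = N then v (x, 0) else 0)
      + u (x, 1) * (if x = 1 then v (x, 1) else 0) + u (x, 1) * (if x = N then v (x, 1) else 0)))"
    by (rule sum.cong) (auto simp: Aop_def algebra_simps)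
  also have "\<dots> = H0 + eps * H1 + G - Bd"
    unfolding H0_def H1_def G_def Bd_def sum.distrib sum_subtractf sum_distrib_left ..
  finally show ?thesis using l by simp
qed


lemma sum_list_concat': "sum_list (concat xss) = sum_list (map sum_list (xss :: 'a::monoid_add list list))"
  by (induction xss) auto

locale bds =
  fixes \<sigma> :: int and N :: nat and eps gam :: real and \<rho> :: "side \<Rightarrow> nat \<Rightarrow> real" and \<mu> :: "config pmf"
  assumes sigma: "\<sigma> \<in> {-1, 0, 1}" and N: "1 \<le> N" and eps: "0 \<le> eps" "eps \<le> 1" and gam: "0 < gam"
    and rho_nonneg: "\<And>b j. j \<in> {0, 1} \<Longrightarrow> 0 \<le> \<rho> b j"
    and rho_excl: "\<sigma> = -1 \<Longrightarrow> (\<And>b j. j \<in> {0, 1} \<Longrightarrow> \<rho> b j \<le> 1)"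
    and stat: "stationary \<sigma> N eps gam \<rho> \<mu>"
begin

abbreviation T where "T \<equiv> transitions \<sigma> N eps gam \<rho>"

definition G :: "(config \<Rightarrow> real) \<Rightarrow> config \<Rightarrow> real" where
  "G h \<eta> = sum_list (map (\<lambda>(r, \<zeta>). r * (h \<zeta> - h \<eta>)) (T \<eta>))"

definition lin :: "(nat \<times> nat \<Rightarrow> real) \<Rightarrow> config \<Rightarrow> real" where
  "lin v \<eta> = (\<Sum>x\<in>{1..N}. v (x, 0) * real (\<eta> (x, 0)) + v (x, 1) * real (\<eta> (x, 1)))"

definition Rv :: "(nat \<times> nat \<Rightarrow> real) \<Rightarrow> real" where
  "Rv v = v (1, 0) * \<rho> L 0 + v (1, 1) * \<rho> L 1 + v (N, 0) * \<rho> R 0 + v (N, 1) * \<rho> R 1"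

definition hopF where "hopF \<eta> x i = (eps ^ i * real (\<eta> (x, i)) * (1 + of_int \<sigma> * real (\<eta> (x + 1, i))), movep (x, i) (x + 1, i) \<eta>)"
definition hopB where "hopB \<eta> x i = (eps ^ i * real (\<eta> (x + 1, i)) * (1 + of_int \<sigma> * real (\<eta> (x, i))), movep (x + 1, i) (x, i) \<eta>)"
definition sw where "sw \<eta> x i = (gam * real (\<eta> (x, i)) * (1 + of_int \<sigma> * real (\<eta> (x, 1 - i))), movep (x, i) (x, 1 - i) \<eta>)"
definition rL where "rL \<eta> i = (real (\<eta> (1, i)) * (1 + of_int \<sigma> * \<rho> L i), remp (1, i) \<eta>)"
definition aL where "aL \<eta> i = (\<rho> L i * (1 + of_int \<sigma> * real (\<eta> (1, i))), addp (1, i) \<eta>)"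
definition rR where "rR \<eta> i = (real (\<eta> (N, i)) * (1 + of_int \<sigma> * \<rho> R i), remp (N, i) \<eta>)"
definition aR where "aR \<eta> i = (\<rho> R i * (1 + of_int \<sigma> * real (\<eta> (N, i))), addp (N, i) \<eta>)"

lemma trans_sum:
  fixes F :: "real \<times> config \<Rightarrow> 'a::comm_monoid_add"
  shows "sum_list (map F (T \<eta>)) =
    (\<Sum>x\<in>{1..<N}. F (hopF \<eta> x 0) + F (hopB \<eta> x 0) + F (hopF \<eta> x 1) + F (hopB \<eta> x 1))
  + (\<Sum>x\<in>{1..N}. F (sw \<eta> x 0) + F (sw \<eta> x 1))
  + (F (rL \<eta> 0) + F (aL \<eta> 0) + F (rR \<eta> 0) + F (aR \<eta> 0) + F (rL \<eta> 1) + F (aL \<eta> 1) + F (rR \<eta> 1) + F (aR \<eta> 1))"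
proof -
  have e: "(\<Sum>x\<in>{Suc 0..N}. f x) = (\<Sum>x\<in>{Suc 0..<N}. f x) + f N" for f :: "nat \<Rightarrow> 'a"
    using N by (cases N) (auto simp: atLeastLessThanSuc_atLeastAtMost[symmetric] add.commute)
  show ?thesis
    unfolding transitions_def using N
    by (simp add: sum_list_concat' map_concat sum_set_upt_conv_sum_list_nat[symmetric] o_def
        hopF_def hopB_def sw_def rL_def aL_def rR_def aR_def e ac_simps del: upt_Suc)
qed

lemma lin_upd:
  assumes "y \<in> {1..N}" "j \<in> {0, 1}"
  shows "lin v (\<eta>((y, j) := a)) = lin v \<eta> + v (y, j) * (real a - real (\<eta> (y, j)))"
proof -
  have "lin v (\<eta>((y, j) := a)) = (\<Sum>x\<in>{1..N}. (v (x, 0) * real (\<eta> (x, 0)) + v (x, 1) * real (\<eta> (x, 1)))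
      + (if x = y then v (y, j) * (real a - real (\<eta> (y, j))) else 0))"
    unfolding lin_def by (rule sum.cong) (use assms in \<open>auto simp: algebra_simps\<close>)
  then show ?thesis using assms by (simp add: sum.distrib lin_def)
qed

lemma lin_addp: "y \<in> {1..N} \<Longrightarrow> j \<in> {0, 1} \<Longrightarrow> lin v (addp (y, j) \<eta>) = lin v \<eta> + v (y, j)"
  unfolding addp_def by (simp add: lin_upd)

lemma lin_remp: "y \<in> {1..N} \<Longrightarrow> j \<in> {0, 1} \<Longrightarrow>
    lin v (remp (y, j) \<eta>) = (if \<eta> (y, j) = 0 then lin v \<eta> else lin v \<eta> - v (y, j))"
  unfolding remp_def by (simp add: lin_upd of_nat_diff)

lemma lin_movep: "y \<in> {1..N} \<Longrightarrow> j \<in> {0, 1} \<Longrightarrow> y' \<in> {1..N} \<Longrightarrow> j' \<in> {0, 1} \<Longrightarrow>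
    lin v (movep (y, j) (y', j') \<eta>) = (if \<eta> (y, j) = 0 then lin v \<eta> + v (y', j') else lin v \<eta> - v (y, j) + v (y', j'))"
  unfolding movep_def by (simp add: lin_addp lin_remp)

lemma G_lin: "G (lin v) \<eta> = Eform N eps gam v (\<lambda>k. real (\<eta> k)) + Rv v"
proof -
  let ?F = "\<lambda>(r, \<zeta>). r * (lin v \<zeta> - lin v \<eta>)"
  have hop: "?F (hopF \<eta> x 0) + ?F (hopB \<eta> x 0) + ?F (hopF \<eta> x 1) + ?F (hopB \<eta> x 1)
     = (v (x + 1, 0) - v (x, 0)) * (real (\<eta> (x, 0)) - real (\<eta> (x + 1, 0)))
        + eps * ((v (x + 1, 1) - v (x, 1)) * (real (\<eta> (x, 1)) - real (\<eta> (x + 1, 1))))" if "x \<in> {1..<N}" for x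
    using that by (simp add: hopF_def hopB_def lin_movep algebra_simps)
  have swp: "?F (sw \<eta> x 0) + ?F (sw \<eta> x 1) = gam * ((v (x, 1) - v (x, 0)) * (real (\<eta> (x, 0)) - real (\<eta> (x, 1))))"
    if "x \<in> {1..N}" for x
    using that by (simp add: sw_def lin_movep algebra_simps)
  have bd: "?F (rL \<eta> 0) + ?F (aL \<eta> 0) + ?F (rR \<eta> 0) + ?F (aR \<eta> 0) + ?F (rL \<eta> 1) + ?F (aL \<eta> 1) + ?F (rR \<eta> 1) + ?F (aR \<eta> 1)
     = Rv v - (v (1, 0) * real (\<eta> (1, 0)) + v (1, 1) * real (\<eta> (1, 1)) + v (N, 0) * real (\<eta> (N, 0)) + v (N, 1) * real (\<eta> (N, 1)))"
    using N by (simp add: rL_def aL_def rR_def aR_def Rv_def lin_remp lin_addp algebra_simps)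
  show ?thesis
    unfolding G_def trans_sum bd Eform_def
    using sum.cong[OF refl hop, of "{1..<N}"] sum.cong[OF refl swp, of "{1..N}"]
    by simp
qed

end

context bds begin

abbreviation S where "S \<equiv> statespace \<sigma> N"

lemma T_eq: "T \<eta> = concat (map (\<lambda>x. [hopF \<eta> x 0, hopB \<eta> x 0, hopF \<eta> x 1, hopB \<eta> x 1]) [1..<N])
   @ concat (map (\<lambda>x. [sw \<eta> x 0, sw \<eta> x 1]) [1..<N + 1])
   @ [rL \<eta> 0, aL \<eta> 0, rR \<eta> 0, aR \<eta> 0, rL \<eta> 1, aL \<eta> 1, rR \<eta> 1, aR \<eta> 1]"
  unfolding transitions_def hopF_def hopB_def sw_def rL_def aL_def rR_def aR_def
  by (simp del: upt_Suc)

lemma set_T: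
  assumes "e \<in> set (T \<eta>)"
  shows "(\<exists>x\<in>{1..<N}. \<exists>i\<in>{0, 1}. e = hopF \<eta> x i \<or> e = hopB \<eta> x i) \<or> (\<exists>x\<in>{1..N}. \<exists>i\<in>{0, 1}. e = sw \<eta> x i)
    \<or> (\<exists>i\<in>{0, 1}. e = rL \<eta> i \<or> e = aL \<eta> i \<or> e = rR \<eta> i \<or> e = aR \<eta> i)"
proof -
  have "e \<in> (\<Union>x\<in>{1..<N}. {hopF \<eta> x 0, hopB \<eta> x 0, hopF \<eta> x 1, hopB \<eta> x 1}) \<union> (\<Union>x\<in>{1..<N+1}. {sw \<eta> x 0, sw \<eta> x 1})
     \<union> {rL \<eta> 0, aL \<eta> 0, rR \<eta> 0, aR \<eta> 0, rL \<eta> 1, aL \<eta> 1, rR \<eta> 1, aR \<eta> 1}"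
    using assms unfolding T_eq by (simp only: set_append set_concat set_map set_upt image_image list.set) simp
  then show ?thesis by auto
qed

lemma S_le1: assumes "\<eta> \<in> S" "\<sigma> = -1" shows "\<eta> p \<le> 1"
proof -
  have "\<sigma> = -1 \<longrightarrow> (\<forall>p. \<eta> p \<le> 1)" using assms(1) unfolding statespace_def mem_Collect_eq by (rule conjunct2)
  then show ?thesis using assms(2) by blast
qed

lemma S_zero: "\<eta> \<in> S \<Longrightarrow> \<not> (fst p \<in> {1..N} \<and> snd p \<in> {0, 1}) \<Longrightarrow> \<eta> p = 0"
  by (cases p) (auto simp: statespace_def)

lemma fac_eta: "\<eta> \<in> S \<Longrightarrow> 0 \<le> 1 + real_of_int \<sigma> * real (\<eta> p)"
  using sigma S_le1[of \<eta> p] by auto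

lemma fac_rho: "j \<in> {0, 1} \<Longrightarrow> 0 \<le> 1 + real_of_int \<sigma> * \<rho> b j"
  using sigma rho_excl[of j b] rho_nonneg[of j b] by auto

lemma T_cases:
  assumes "(r, \<zeta>) \<in> set (T \<eta>)"
  obtains (hf) x i where "x \<in> {1..<N}" "i \<in> {0, 1}" "r = eps ^ i * real (\<eta> (x, i)) * (1 + real_of_int \<sigma> * real (\<eta> (x + 1, i)))" "\<zeta> = movep (x, i) (x + 1, i) \<eta>"
    | (hb) x i where "x \<in> {1..<N}" "i \<in> {0, 1}" "r = eps ^ i * real (\<eta> (x + 1, i)) * (1 + real_of_int \<sigma> * real (\<eta> (x, i)))" "\<zeta> = movep (x + 1, i) (x, i) \<eta>"
    | (s) x i where "x \<in> {1..N}" "i \<in> {0, 1}" "r = gam * real (\<eta> (x, i)) * (1 + real_of_int \<sigma> * real (\<eta> (x, 1 - i)))" "\<zeta> = movep (x, i) (x, 1 - i) \<eta>"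
    | (rl) i where "i \<in> {0, 1}" "r = real (\<eta> (1, i)) * (1 + real_of_int \<sigma> * \<rho> L i)" "\<zeta> = remp (1, i) \<eta>"
    | (al) i where "i \<in> {0, 1}" "r = \<rho> L i * (1 + real_of_int \<sigma> * real (\<eta> (1, i)))" "\<zeta> = addp (1, i) \<eta>"
    | (rr) i where "i \<in> {0, 1}" "r = real (\<eta> (N, i)) * (1 + real_of_int \<sigma> * \<rho> R i)" "\<zeta> = remp (N, i) \<eta>"
    | (ar) i where "i \<in> {0, 1}" "r = \<rho> R i * (1 + real_of_int \<sigma> * real (\<eta> (N, i)))" "\<zeta> = addp (N, i) \<eta>"
proof -
  note st = set_T[OF assms]
  show ?thesis
  proof (cases "\<exists>x\<in>{1..<N}. \<exists>i\<in>{0, 1}. (r, \<zeta>) = hopF \<eta> x i")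
    case True then show ?thesis using hf unfolding hopF_def by blast
  next
    case F1: False
    show ?thesis
    proof (cases "\<exists>x\<in>{1..<N}. \<exists>i\<in>{0, 1}. (r, \<zeta>) = hopB \<eta> x i")
      case True then show ?thesis using hb unfolding hopB_def by blast
    next
      case F2: False
      show ?thesis
      proof (cases "\<exists>x\<in>{1..N}. \<exists>i\<in>{0, 1}. (r, \<zeta>) = sw \<eta> x i")
        case True then show ?thesis using s unfolding sw_def by blast
      next
        case F3: False
        then obtain i where i: "i \<in> {0, 1}" "(r, \<zeta>) = rL \<eta> i \<or> (r, \<zeta>) = aL \<eta> i \<or> (r, \<zeta>) = rR \<eta> i \<or> (r, \<zeta>) = aR \<eta> i"
          using st F1 F2 by blast
        then show ?thesis using rl al rr ar unfolding rL_def aL_def rR_def aR_def by blast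
      qed
    qed
  qed
qed

lemma rate_nonneg:
  assumes "\<eta> \<in> S" "(r, \<zeta>) \<in> set (T \<eta>)"
  shows "0 \<le> r"
  using assms(2)
proof (cases rule: T_cases)
  case (hf x i) then show ?thesis using fac_eta[OF assms(1)] eps by simp
next
  case (hb x i) then show ?thesis using fac_eta[OF assms(1)] eps by simp
next
  case (s x i) then show ?thesis using fac_eta[OF assms(1)] gam by simp
next
  case (rl i) then show ?thesis using fac_rho[OF rl(1)] by simp
next
  case (al i) then show ?thesis using fac_eta[OF assms(1)] rho_nonneg[OF al(1)] by simp
next
  case (rr i) then show ?thesis using fac_rho[OF rr(1)] by simp
next
  case (ar i) then show ?thesis using fac_eta[OF assms(1)] rho_nonneg[OF ar(1)] by simp
qed

lemma upd_S:
  assumes "\<eta> \<in> S" "y \<in> {1..N}" "j \<in> {0, 1}" "\<sigma> = -1 \<longrightarrow> a \<le> 1"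
  shows "\<eta>((y, j) := a) \<in> S"
  using assms by (auto simp: statespace_def)

lemma stay_S:
  assumes "\<eta> \<in> S" "(r, \<zeta>) \<in> set (T \<eta>)" "r \<noteq> 0"
  shows "\<zeta> \<in> S"
proof -
  have le1: "\<sigma> = -1 \<Longrightarrow> \<eta> p \<le> 1" for p using S_le1[OF assms(1)] .
  have mv: "movep (y, j) (y', j') \<eta> \<in> S" if "y \<in> {1..N}" "j \<in> {0, 1}" "y' \<in> {1..N}" "j' \<in> {0, 1}"
      "(y, j) \<noteq> (y', j')" "\<sigma> = -1 \<longrightarrow> \<eta> (y', j') = 0" for y j y' j'
    unfolding movep_def addp_def remp_def
    by (rule upd_S[OF upd_S[OF assms(1)]]) (use that le1 in auto)
  have ad: "addp (y, j) \<eta> \<in> S" if "y \<in> {1..N}" "j \<in> {0, 1}" "\<sigma> = -1 \<longrightarrow> \<eta> (y, j) = 0" for y j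
    unfolding addp_def by (rule upd_S[OF assms(1)]) (use that in auto)
  have rm: "remp (y, j) \<eta> \<in> S" if "y \<in> {1..N}" "j \<in> {0, 1}" for y j
    unfolding remp_def by (rule upd_S[OF assms(1)]) (use that le1 in \<open>auto simp: le_diff_conv\<close>)
  have z: "\<eta> p = 0" if "\<sigma> = -1" "1 + real_of_int \<sigma> * real (\<eta> p) \<noteq> 0" for p
    using le1[of p] that by auto
  show ?thesis
  proof -
    consider (hf) x i where "x \<in> {1..<N}" "i \<in> {0, 1}" "(r, \<zeta>) = hopF \<eta> x i"
      | (hb) x i where "x \<in> {1..<N}" "i \<in> {0, 1}" "(r, \<zeta>) = hopB \<eta> x i"
      | (s) x i where "x \<in> {1..N}" "i \<in> {0, 1}" "(r, \<zeta>) = sw \<eta> x i"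
      | (bd) i where "i \<in> {0, 1}" "(r, \<zeta>) = rL \<eta> i \<or> (r, \<zeta>) = aL \<eta> i \<or> (r, \<zeta>) = rR \<eta> i \<or> (r, \<zeta>) = aR \<eta> i"
      using set_T[OF assms(2)] by blast
    then show ?thesis
    proof cases
      case hf
      then have e: "\<zeta> = movep (x, i) (x + 1, i) \<eta>" "r = eps ^ i * real (\<eta> (x, i)) * (1 + real_of_int \<sigma> * real (\<eta> (x + 1, i)))"
        by (simp_all add: hopF_def)
      then have "1 + real_of_int \<sigma> * real (\<eta> (x + 1, i)) \<noteq> 0" using assms(3) unfolding e(2) by (metis mult_zero_right)
      then have "\<sigma> = -1 \<longrightarrow> \<eta> (x + 1, i) = 0" using z by blast
      then show ?thesis unfolding e(1) using hf(1,2) by (intro mv) auto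
    next
      case hb
      then have e: "\<zeta> = movep (x + 1, i) (x, i) \<eta>" "r = eps ^ i * real (\<eta> (x + 1, i)) * (1 + real_of_int \<sigma> * real (\<eta> (x, i)))"
        by (simp_all add: hopB_def)
      then have "1 + real_of_int \<sigma> * real (\<eta> (x, i)) \<noteq> 0" using assms(3) unfolding e(2) by (metis mult_zero_right)
      then have "\<sigma> = -1 \<longrightarrow> \<eta> (x, i) = 0" using z by blast
      then show ?thesis unfolding e(1) using hb(1,2) by (intro mv) auto
    next
      case s
      then have e: "\<zeta> = movep (x, i) (x, 1 - i) \<eta>" "r = gam * real (\<eta> (x, i)) * (1 + real_of_int \<sigma> * real (\<eta> (x, 1 - i)))"
        by (simp_all add: sw_def)
      then have "1 + real_of_int \<sigma> * real (\<eta> (x, 1 - i)) \<noteq> 0" using assms(3) unfolding e(2) by (metis mult_zero_right)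
      then have "\<sigma> = -1 \<longrightarrow> \<eta> (x, 1 - i) = 0" using z by blast
      then show ?thesis unfolding e(1) using s(1,2) by (intro mv) auto
    next
      case bd
      have N1: "N \<in> {1..N}" "1 \<in> {1..N}" using N by auto
      consider "(r, \<zeta>) = rL \<eta> i" | "(r, \<zeta>) = aL \<eta> i" | "(r, \<zeta>) = rR \<eta> i" | "(r, \<zeta>) = aR \<eta> i"
        using bd by blast
      then show ?thesis
      proof cases
        case 1 then show ?thesis using rm[OF N1(2) bd(1)] by (simp add: rL_def)
      next
        case 2
        then have e: "\<zeta> = addp (1, i) \<eta>" "r = \<rho> L i * (1 + real_of_int \<sigma> * real (\<eta> (1, i)))"
          by (simp_all add: aL_def)
        then have "1 + real_of_int \<sigma> * real (\<eta> (1, i)) \<noteq> 0" using assms(3) unfolding e(2) by (metis mult_zero_right)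
        then have "\<sigma> = -1 \<longrightarrow> \<eta> (1, i) = 0" using z by blast
        then show ?thesis unfolding e(1) using N1 bd(1) by (intro ad) auto
      next
        case 3 then show ?thesis using rm[OF N1(1) bd(1)] by (simp add: rR_def)
      next
        case 4
        then have e: "\<zeta> = addp (N, i) \<eta>" "r = \<rho> R i * (1 + real_of_int \<sigma> * real (\<eta> (N, i)))"
          by (simp_all add: aR_def)
        then have "1 + real_of_int \<sigma> * real (\<eta> (N, i)) \<noteq> 0" using assms(3) unfolding e(2) by (metis mult_zero_right)
        then have "\<sigma> = -1 \<longrightarrow> \<eta> (N, i) = 0" using z by blast
        then show ?thesis unfolding e(1) using N1 bd(1) by (intro ad) auto
      qed
    qed
  qed
qed

end

lemma sum_list_neg: "sum_list (map (\<lambda>x. - f x) xs) = - sum_list (map f xs :: real list)"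
  by (induction xs) auto

lemma sum_list_if_const: "sum_list (map (\<lambda>x. if P then f x else 0) xs) = (if P then sum_list (map f xs) else (0::real))"
  by (induction xs) auto

lemma sum_list_filter_mult:
  "c * sum_list (map fst (filter P xs)) = sum_list (map (\<lambda>e. if P e then c * fst e else 0) (xs :: (real \<times> 'a) list))"
  by (induction xs) (auto simp: algebra_simps)

lemma qsum_list:
  fixes h :: "'a \<Rightarrow> real"
  assumes "finite F"
  shows "(\<Sum>\<zeta>\<in>F. (if \<zeta> = \<eta> then 0 else sum_list (map fst (filter (\<lambda>rt. snd rt = \<zeta>) xs))) * h \<zeta>)
     = sum_list (map (\<lambda>(r, \<zeta>). if \<zeta> \<in> F \<and> \<zeta> \<noteq> \<eta> then r * h \<zeta> else 0) xs)"
proof (induction xs)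
  case Nil
  show ?case by (simp add: sum.neutral)
next
  case (Cons a xs)
  obtain r0 \<zeta>0 where a: "a = (r0, \<zeta>0)" by (cases a)
  have "(\<Sum>\<zeta>\<in>F. (if \<zeta> = \<eta> then 0 else sum_list (map fst (filter (\<lambda>rt. snd rt = \<zeta>) (a # xs)))) * h \<zeta>)
    = (\<Sum>\<zeta>\<in>F. (if \<zeta> = \<eta> then 0 else sum_list (map fst (filter (\<lambda>rt. snd rt = \<zeta>) xs))) * h \<zeta>
         + (if \<zeta> = \<zeta>0 then (if \<zeta>0 = \<eta> then 0 else r0 * h \<zeta>0) else 0))"
    by (rule sum.cong) (auto simp: a algebra_simps)
  also have "\<dots> = (\<Sum>\<zeta>\<in>F. (if \<zeta> = \<eta> then 0 else sum_list (map fst (filter (\<lambda>rt. snd rt = \<zeta>) xs))) * h \<zeta>)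
         + (if \<zeta>0 \<in> F then (if \<zeta>0 = \<eta> then 0 else r0 * h \<zeta>0) else 0)"
    using assms by (simp add: sum.distrib)
  finally show ?case using Cons.IH by (simp add: a)
qed

context bds begin

lemma lin_ge:
  assumes v: "\<And>y j. y \<in> {1..N} \<Longrightarrow> j \<in> {0, 1} \<Longrightarrow> 0 \<le> v (y, j)" and y: "y \<in> {1..N}" "j \<in> {0, 1}"
  shows "v (y, j) * real (\<eta> (y, j)) \<le> lin v \<eta>"
proof -
  have "v (y, j) * real (\<eta> (y, j)) \<le> v (y, 0) * real (\<eta> (y, 0)) + v (y, 1) * real (\<eta> (y, 1))"
    using y v[of y 0] v[of y 1] by auto
  also have "\<dots> \<le> lin v \<eta>" unfolding lin_def
    by (rule member_le_sum) (use y v in \<open>auto intro!: add_nonneg_nonneg\<close>)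
  finally show ?thesis .
qed

lemma finite_lev:
  assumes c: "0 < c" and v: "\<And>y j. y \<in> {1..N} \<Longrightarrow> j \<in> {0, 1} \<Longrightarrow> c \<le> v (y, j)"
  shows "finite {\<eta> \<in> S. lin v \<eta> < M}"
proof -
  define K where "K = {1..N} \<times> {0, 1::nat}"
  define b where "b = nat \<lceil>M / c\<rceil>"
  have v0: "0 \<le> v (y, j)" if "y \<in> {1..N}" "j \<in> {0, 1}" for y j
    by (rule order_trans[OF less_imp_le[OF c] v[OF that]])
  have sub: "{\<eta> \<in> S. lin v \<eta> < M} \<subseteq> {f. \<forall>p. (p \<in> K \<longrightarrow> f p \<in> {0..b}) \<and> (p \<notin> K \<longrightarrow> f p = 0)}"
  proof (rule subsetI)
    fix \<eta> assume "\<eta> \<in> {\<eta> \<in> S. lin v \<eta> < M}"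
    then have \<eta>: "\<eta> \<in> S" "lin v \<eta> < M" by auto
    have "(p \<in> K \<longrightarrow> \<eta> p \<in> {0..b}) \<and> (p \<notin> K \<longrightarrow> \<eta> p = 0)" for p
    proof (intro conjI impI)
      assume "p \<notin> K"
      then have "\<not> (fst p \<in> {1..N} \<and> snd p \<in> {0, 1})" unfolding K_def by (cases p) simp
      then show "\<eta> p = 0" by (rule S_zero[OF \<eta>(1)])
    next
      assume "p \<in> K"
      then obtain y j where p: "p = (y, j)" "y \<in> {1..N}" "j \<in> {0, 1}" unfolding K_def by blast
      have "c * real (\<eta> p) \<le> v p * real (\<eta> p)" using v[OF p(2,3)] p(1) by (intro mult_right_mono) auto
      also have "\<dots> \<le> lin v \<eta>" unfolding p(1) by (rule lin_ge[where v=v, OF v0 p(2,3)])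
      finally have "c * real (\<eta> p) < M" using \<eta>(2) by linarith
      then have "real (\<eta> p) < M / c" using c by (simp add: field_simps)
      then have "real (\<eta> p) \<le> real b" unfolding b_def by linarith
      then show "\<eta> p \<in> {0..b}" by simp
    qed
    then show "\<eta> \<in> {f. \<forall>p. (p \<in> K \<longrightarrow> f p \<in> {0..b}) \<and> (p \<notin> K \<longrightarrow> f p = 0)}" by blast
  qed
  have "finite {f. \<forall>p. (p \<in> K \<longrightarrow> f p \<in> {0..b}) \<and> (p \<notin> K \<longrightarrow> f p = (0::nat))}"
    by (rule finite_set_of_finite_funs) (auto simp: K_def)
  then show ?thesis using sub by (rule finite_subset[rotated])
qed

lemma supp_S: "set_pmf \<mu> \<subseteq> S"
  using stat by (simp add: stationary_def)

lemma balance: "\<zeta> \<in> S \<Longrightarrow> (\<integral>\<^sup>+ \<eta>. ennreal (qrate \<sigma> N eps gam \<rho> \<eta> \<zeta>) \<partial>measure_pmf \<mu>)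
          = ennreal (pmf \<mu> \<zeta> * exitrate \<sigma> N eps gam \<rho> \<zeta>)"
  using stat by (simp add: stationary_def)

lemma q_nonneg: "\<eta> \<in> S \<Longrightarrow> 0 \<le> qrate \<sigma> N eps gam \<rho> \<eta> \<zeta>"
  unfolding qrate_def using rate_nonneg[of \<eta>] by (auto intro!: sum_list_nonneg)

lemma ex_nonneg: "\<eta> \<in> S \<Longrightarrow> 0 \<le> exitrate \<sigma> N eps gam \<rho> \<eta>"
  unfolding exitrate_def using rate_nonneg[of \<eta>] by (auto intro!: sum_list_nonneg)

lemma G_zero:
  assumes h0: "\<And>\<eta>. 0 \<le> h \<eta>" and F: "finite F" "F \<subseteq> S" and hz: "\<And>\<eta>. \<eta> \<in> S \<Longrightarrow> \<eta> \<notin> F \<Longrightarrow> h \<eta> = 0"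
  shows "integrable \<mu> (G h)" "(\<integral>\<eta>. G h \<eta> \<partial>\<mu>) = 0"
proof -
  let ?q = "qrate \<sigma> N eps gam \<rho>" and ?ex = "exitrate \<sigma> N eps gam \<rho>"
  define A where "A \<eta> = (\<Sum>\<zeta>\<in>F. ?q \<eta> \<zeta> * h \<zeta>)" for \<eta>
  define B where "B \<eta> = h \<eta> * ?ex \<eta>" for \<eta>
  have GAB: "G h \<eta> = A \<eta> - B \<eta>" if \<eta>: "\<eta> \<in> S" for \<eta>
  proof -
    have "A \<eta> = sum_list (map (\<lambda>(r, \<zeta>). if \<zeta> \<in> F \<and> \<zeta> \<noteq> \<eta> then r * h \<zeta> else 0) (T \<eta>))"
      unfolding A_def qrate_def by (rule qsum_list[OF F(1)])
    also have "\<dots> = sum_list (map (\<lambda>(r, \<zeta>). if \<zeta> \<noteq> \<eta> then r * h \<zeta> else 0) (T \<eta>))"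
    proof (rule arg_cong[where f=sum_list], rule map_cong[OF refl])
      fix e assume e: "e \<in> set (T \<eta>)"
      obtain r \<zeta> where rz: "e = (r, \<zeta>)" by (cases e)
      have "r * h \<zeta> = 0" if "\<zeta> \<notin> F"
      proof (cases "r = 0")
        case False
        then have "\<zeta> \<in> S" using stay_S[OF \<eta>] e rz by blast
        then show ?thesis using hz that by simp
      qed simp
      then show "(case e of (r, \<zeta>) \<Rightarrow> if \<zeta> \<in> F \<and> \<zeta> \<noteq> \<eta> then r * h \<zeta> else 0) = (case e of (r, \<zeta>) \<Rightarrow> if \<zeta> \<noteq> \<eta> then r * h \<zeta> else 0)"
        by (auto simp: rz)
    qed
    finally have a: "A \<eta> = \<dots>" .
    have b: "B \<eta> = sum_list (map (\<lambda>(r, \<zeta>). if \<zeta> \<noteq> \<eta> then r * h \<eta> else 0) (T \<eta>))"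
      unfolding B_def exitrate_def mult.commute[of "h \<eta>"] sum_list_filter_mult
      by (rule arg_cong[where f=sum_list], rule map_cong[OF refl]) (auto simp: algebra_simps)
    have "G h \<eta> = sum_list (map (\<lambda>e. (case e of (r, \<zeta>) \<Rightarrow> if \<zeta> \<noteq> \<eta> then r * h \<zeta> else 0) - (case e of (r, \<zeta>) \<Rightarrow> if \<zeta> \<noteq> \<eta> then r * h \<eta> else 0)) (T \<eta>))"
      unfolding G_def by (rule arg_cong[where f=sum_list], rule map_cong[OF refl]) (auto simp: algebra_simps)
    then show ?thesis unfolding a b sum_list_subtractf .
  qed
  have A0: "0 \<le> A \<eta>" if "\<eta> \<in> S" for \<eta>
    unfolding A_def using q_nonneg[OF that] h0 by (auto intro!: sum_nonneg)
  have B0: "0 \<le> B \<eta>" if "\<eta> \<in> S" for \<eta>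
    unfolding B_def using ex_nonneg[OF that] h0 by auto
  define c where "c = (\<Sum>\<zeta>\<in>F. h \<zeta> * (pmf \<mu> \<zeta> * ?ex \<zeta>))"
  have c0: "0 \<le> c" unfolding c_def using F ex_nonneg h0 by (auto intro!: sum_nonneg)
  have intA: "(\<integral>\<^sup>+ \<eta>. ennreal (A \<eta>) \<partial>\<mu>) = ennreal c"
  proof -
    have "(\<integral>\<^sup>+ \<eta>. ennreal (A \<eta>) \<partial>\<mu>) = (\<integral>\<^sup>+ \<eta>. (\<Sum>\<zeta>\<in>F. ennreal (h \<zeta>) * ennreal (?q \<eta> \<zeta>)) \<partial>\<mu>)"
    proof (rule nn_integral_cong_AE, rule AE_pmfI)
      fix \<eta> assume "\<eta> \<in> set_pmf \<mu>"
      then have \<eta>: "\<eta> \<in> S" using supp_S by blast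
      show "ennreal (A \<eta>) = (\<Sum>\<zeta>\<in>F. ennreal (h \<zeta>) * ennreal (?q \<eta> \<zeta>))"
        unfolding A_def using q_nonneg[OF \<eta>] h0
        by (simp add: ennreal_mult[symmetric] mult.commute)
    qed
    also have "\<dots> = (\<Sum>\<zeta>\<in>F. ennreal (h \<zeta>) * (\<integral>\<^sup>+ \<eta>. ennreal (?q \<eta> \<zeta>) \<partial>\<mu>))"
      by (simp add: nn_integral_sum nn_integral_cmult)
    also have "\<dots> = (\<Sum>\<zeta>\<in>F. ennreal (h \<zeta>) * ennreal (pmf \<mu> \<zeta> * ?ex \<zeta>))"
      using F(2) by (intro sum.cong refl) (simp add: balance subset_iff)
    also have "\<dots> = ennreal c" unfolding c_def using F h0 ex_nonneg
      by (subst sum_ennreal[symmetric]) (auto simp: ennreal_mult subset_iff)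
    finally show ?thesis .
  qed
  have intB: "(\<integral>\<^sup>+ \<eta>. ennreal (B \<eta>) \<partial>\<mu>) = ennreal c"
  proof -
    have "(\<integral>\<^sup>+ \<eta>. ennreal (B \<eta>) \<partial>\<mu>) = (\<Sum>\<eta>\<in>F. ennreal (B \<eta>) * pmf \<mu> \<eta>)"
      by (rule nn_integral_measure_pmf_support[OF F(1)]) (use supp_S hz in \<open>auto simp: B_def\<close>)
    also have "\<dots> = ennreal c" unfolding c_def B_def using F h0 ex_nonneg
      by (subst sum_ennreal[symmetric]) (auto simp: ennreal_mult[symmetric] subset_iff algebra_simps intro!: sum.cong)
    finally show ?thesis .
  qed
  have iA: "integrable \<mu> A"
    by (rule integrableI_nonneg) (use intA A0 supp_S in \<open>auto intro!: AE_pmfI\<close>)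
  have iB: "integrable \<mu> B"
    by (rule integrableI_nonneg) (use intB B0 supp_S in \<open>auto intro!: AE_pmfI\<close>)
  have eA: "(\<integral>\<eta>. A \<eta> \<partial>\<mu>) = c"
  proof -
    have ae0: "AE \<eta> in \<mu>. 0 \<le> A \<eta>" using A0 supp_S by (auto intro!: AE_pmfI)
    have "ennreal (\<integral>\<eta>. A \<eta> \<partial>\<mu>) = ennreal c"
      using nn_integral_eq_integral[OF iA ae0] intA by simp
    moreover have "0 \<le> (\<integral>\<eta>. A \<eta> \<partial>\<mu>)" by (rule integral_nonneg_AE) (use A0 supp_S in \<open>auto intro!: AE_pmfI\<close>)
    ultimately show ?thesis using c0 by simp
  qed
  have eB: "(\<integral>\<eta>. B \<eta> \<partial>\<mu>) = c"
  proof -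
    have ae0: "AE \<eta> in \<mu>. 0 \<le> B \<eta>" using B0 supp_S by (auto intro!: AE_pmfI)
    have "ennreal (\<integral>\<eta>. B \<eta> \<partial>\<mu>) = ennreal c"
      using nn_integral_eq_integral[OF iB ae0] intB by simp
    moreover have "0 \<le> (\<integral>\<eta>. B \<eta> \<partial>\<mu>)" by (rule integral_nonneg_AE) (use B0 supp_S in \<open>auto intro!: AE_pmfI\<close>)
    ultimately show ?thesis using c0 by simp
  qed
  have ae: "AE \<eta> in \<mu>. G h \<eta> = A \<eta> - B \<eta>" using GAB supp_S by (auto intro!: AE_pmfI)
  show "integrable \<mu> (G h)"
    using integrable_cong_AE[OF _ _ ae] iA iB by simp
  have "(\<integral>\<eta>. G h \<eta> \<partial>\<mu>) = (\<integral>\<eta>. A \<eta> - B \<eta> \<partial>\<mu>)" by (rule integral_cong_AE) (use ae in auto)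
  also have "\<dots> = 0" using iA iB eA eB by simp
  finally show "(\<integral>\<eta>. G h \<eta> \<partial>\<mu>) = 0" .
qed

end

context bds begin

definition nn :: "config \<Rightarrow> real" where "nn = lin (\<lambda>_. 1)"

lemma fin_integrable:
  fixes f :: "config \<Rightarrow> real"
  assumes "finite F" "\<And>\<eta>. \<eta> \<in> S \<Longrightarrow> \<eta> \<notin> F \<Longrightarrow> f \<eta> = 0"
  shows "integrable \<mu> f"
proof (rule integrableI_bounded)
  show "f \<in> borel_measurable (measure_pmf \<mu>)" by simp
  have "(\<integral>\<^sup>+ \<eta>. ennreal (norm (f \<eta>)) \<partial>\<mu>) = (\<Sum>\<eta>\<in>F. ennreal (norm (f \<eta>)) * pmf \<mu> \<eta>)"
    by (rule nn_integral_measure_pmf_support[OF assms(1)]) (use assms(2) supp_S in auto)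
  also have "\<dots> = ennreal (\<Sum>\<eta>\<in>F. norm (f \<eta>) * pmf \<mu> \<eta>)"
    by (subst sum_ennreal[symmetric]) (auto simp: ennreal_mult)
  also have "\<dots> < \<infinity>" by simp
  finally show "(\<integral>\<^sup>+ \<eta>. ennreal (norm (f \<eta>)) \<partial>\<mu>) < \<infinity>" .
qed

lemma G_minus: "G (\<lambda>\<eta>. a - f \<eta>) \<eta> = - G f \<eta>"
proof -
  have "G (\<lambda>\<eta>. a - f \<eta>) \<eta> = sum_list (map (\<lambda>e. - (case e of (r, \<zeta>) \<Rightarrow> r * (f \<zeta> - f \<eta>))) (T \<eta>))"
    unfolding G_def by (rule arg_cong[where f=sum_list], rule map_cong[OF refl]) (auto simp: algebra_simps)
  then show ?thesis unfolding sum_list_neg G_def .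
qed

lemma G_min_zero:
  assumes c: "0 < c" and v: "\<And>y j. y \<in> {1..N} \<Longrightarrow> j \<in> {0, 1} \<Longrightarrow> c \<le> v (y, j)"
  shows "integrable \<mu> (G (\<lambda>\<eta>. min (lin v \<eta>) M))" "(\<integral>\<eta>. G (\<lambda>\<eta>. min (lin v \<eta>) M) \<eta> \<partial>\<mu>) = 0"
proof -
  define h where "h \<eta> = max 0 (M - lin v \<eta>)" for \<eta>
  have e: "G (\<lambda>\<eta>. min (lin v \<eta>) M) = (\<lambda>\<eta>. - G h \<eta>)"
  proof
    fix \<eta>
    have "(\<lambda>\<eta>. min (lin v \<eta>) M) = (\<lambda>\<eta>. M - h \<eta>)" unfolding h_def by (auto simp: fun_eq_iff)
    then show "G (\<lambda>\<eta>. min (lin v \<eta>) M) \<eta> = - G h \<eta>" using G_minus by simp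
  qed
  have fin: "finite {\<eta> \<in> S. lin v \<eta> < M}" by (rule finite_lev[where v=v, OF c v])
  have h0: "0 \<le> h \<eta>" for \<eta> by (simp add: h_def)
  have hz: "h \<eta> = 0" if "\<eta> \<in> S" "\<eta> \<notin> {\<eta> \<in> S. lin v \<eta> < M}" for \<eta> using that by (simp add: h_def)
  have z: "integrable \<mu> (G h)" "(\<integral>\<eta>. G h \<eta> \<partial>\<mu>) = 0"
    using G_zero[where h=h and F="{\<eta> \<in> S. lin v \<eta> < M}", OF h0 fin _ hz] by auto
  show "integrable \<mu> (G (\<lambda>\<eta>. min (lin v \<eta>) M))" unfolding e using z(1) by simp
  show "(\<integral>\<eta>. G (\<lambda>\<eta>. min (lin v \<eta>) M) \<eta> \<partial>\<mu>) = 0" unfolding e using z(2) by simp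
qed

lemma G_min_le:
  assumes "\<eta> \<in> S"
  shows "G (\<lambda>\<eta>. min (lin v \<eta>) M) \<eta> \<le> (if lin v \<eta> < M then G (lin v) \<eta> else 0)"
proof -
  have "G (\<lambda>\<eta>. min (lin v \<eta>) M) \<eta> \<le> sum_list (map (\<lambda>(r, \<zeta>). if lin v \<eta> < M then r * (lin v \<zeta> - lin v \<eta>) else 0) (T \<eta>))"
    unfolding G_def
  proof (rule sum_list_mono)
    fix e assume e: "e \<in> set (T \<eta>)"
    obtain r \<zeta> where rz: "e = (r, \<zeta>)" by (cases e)
    have r0: "0 \<le> r" using rate_nonneg[OF assms] e rz by blast
    show "(case e of (r, \<zeta>) \<Rightarrow> r * (min (lin v \<zeta>) M - min (lin v \<eta>) M))
        \<le> (case e of (r, \<zeta>) \<Rightarrow> if lin v \<eta> < M then r * (lin v \<zeta> - lin v \<eta>) else 0)"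
      unfolding rz using r0 by (auto intro!: mult_left_mono mult_nonneg_nonpos)
  qed
  also have "\<dots> = (if lin v \<eta> < M then G (lin v) \<eta> else 0)"
    unfolding G_def by (cases "lin v \<eta> < M") (auto simp: case_prod_unfold)
  finally show ?thesis .
qed

end

context bds begin

definition wv :: "nat \<times> nat \<Rightarrow> real" where
  "wv p = real (fst p) * (real N + 1 - real (fst p)) + (if snd p = 1 then 1 / gam else 0)"

lemma Aop_w0: "Aop N eps gam wv x 0 = (if x < N then real N - 2 * real x else 0) + (if 2 \<le> x then 2 * real x - real N - 2 else 0) + 1
   - (if x = 1 then real x * (real N + 1 - real x) else 0) - (if x = N then real x * (real N + 1 - real x) else 0)"
  using gam by (simp add: Aop_def wv_def of_nat_diff algebra_simps)

lemma Aop_w1: "Aop N eps gam wv x 1 = eps * (if x < N then real N - 2 * real x else 0) + eps * (if 2 \<le> x then 2 * real x - real N - 2 else 0) - 1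
   - (if x = 1 then real x * (real N + 1 - real x) + 1 / gam else 0) - (if x = N then real x * (real N + 1 - real x) + 1 / gam else 0)"
  using gam by (simp add: Aop_def wv_def of_nat_diff algebra_simps)

lemma Aop_w:
  assumes x: "x \<in> {1..N}" and i: "i \<in> {0, 1}"
  shows "Aop N eps gam wv x i \<le> -1"
proof -
  have g: "0 < 1 / gam" using gam by simp
  have eN: "eps * (real N - 2) \<le> real N - 2" if "2 \<le> N" using that eps by (intro mult_left_le_one_le) auto
  have e2: "eps * (real N - 2 * real x) + eps * (2 * real x - real N - 2) = - 2 * eps" by (simp add: algebra_simps)
  define ig where "ig = 1 / gam"
  have ig0: "0 < ig" using g by (simp add: ig_def)
  note A = Aop_w0 Aop_w1 ig_def[symmetric]
  consider (a) "x = 1" "N = 1" | (b) "x = 1" "2 \<le> N" | (c) "2 \<le> x" "x < N" | (d) "x = N" "2 \<le> N"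
    using x by force
  then have "Aop N eps gam wv x 0 \<le> -1 \<and> Aop N eps gam wv x 1 \<le> -1"
  proof cases
    case a
    have h2: "- (2 / gam) \<le> 2" using gam by (smt (verit) divide_pos_pos)
    show ?thesis unfolding A using a ig0 by auto
  next
    case b show ?thesis unfolding A using b ig0 eN by (auto simp: algebra_simps)
  next
    case c show ?thesis unfolding A using c ig0 eps e2 by auto
  next
    case d show ?thesis unfolding A using d ig0 eN by (auto simp: algebra_simps)
  qed
  then show ?thesis using i by auto
qed

lemma wv_ge1: assumes "y \<in> {1..N}" "j \<in> {0, 1}" shows "1 \<le> wv (y, j)"
proof -
  have "1 * 1 \<le> real y * (real N + 1 - real y)" using assms by (intro mult_mono) auto
  moreover have "0 \<le> (if j = 1 then 1 / gam else 0)" using gam by simp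
  ultimately show ?thesis unfolding wv_def by simp
qed

lemma nn_eq: "nn \<eta> = (\<Sum>x\<in>{1..N}. real (\<eta> (x, 0)) + real (\<eta> (x, 1)))"
  by (simp add: nn_def lin_def)

lemma nn_nonneg: "0 \<le> nn \<eta>" unfolding nn_eq by (auto intro!: sum_nonneg)

lemma G_w: "G (lin wv) \<eta> \<le> Rv wv - nn \<eta>"
proof -
  have "G (lin wv) \<eta> = (\<Sum>x\<in>{1..N}. real (\<eta> (x, 0)) * Aop N eps gam wv x 0 + real (\<eta> (x, 1)) * Aop N eps gam wv x 1) + Rv wv"
    unfolding G_lin vertex_form[OF N] ..
  also have "\<dots> \<le> (\<Sum>x\<in>{1..N}. real (\<eta> (x, 0)) * (-1) + real (\<eta> (x, 1)) * (-1)) + Rv wv"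
    by (intro add_mono sum_mono mult_left_mono Aop_w) auto
  also have "\<dots> = Rv wv - nn \<eta>" unfolding nn_eq diff_conv_add_uminus sum_negf[symmetric] by (simp add: algebra_simps)
  finally show ?thesis .
qed

lemma Rv_w_nonneg: "0 \<le> Rv wv"
  unfolding Rv_def using wv_ge1[of 1 0] wv_ge1[of 1 1] wv_ge1[of N 0] wv_ge1[of N 1] N rho_nonneg
  by (auto intro!: add_nonneg_nonneg mult_nonneg_nonneg)

lemma nn_integrable: "integrable \<mu> nn"
proof -
  define f where "f m \<eta> = (if lin wv \<eta> < real m then nn \<eta> else 0)" for m :: nat and \<eta>
  have c: "0 < (1::real)" by simp
  have gmz: "integrable \<mu> (G (\<lambda>\<eta>. min (lin wv \<eta>) M)) \<and> (\<integral>\<eta>. G (\<lambda>\<eta>. min (lin wv \<eta>) M) \<eta> \<partial>\<mu>) = 0" for M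
    using G_min_zero[where v=wv and M=M, OF c] wv_ge1 by blast
  have bnd: "(\<integral>\<eta>. f m \<eta> \<partial>\<mu>) \<le> Rv wv" for m
  proof -
    let ?M = "real m"
    have fin: "finite {\<eta> \<in> S. lin wv \<eta> < ?M}" by (rule finite_lev[where v=wv, OF c wv_ge1])
    have if_int: "integrable \<mu> (\<lambda>\<eta>. if lin wv \<eta> < ?M then G (lin wv) \<eta> else 0)"
      by (rule fin_integrable[OF fin]) auto
    have f_int: "integrable \<mu> (f m)"
      by (rule fin_integrable[OF fin]) (auto simp: f_def)
    have rf_int: "integrable \<mu> (\<lambda>\<eta>. Rv wv - f m \<eta>)"
      by (intro Bochner_Integration.integrable_diff measure_pmf.integrable_const f_int)
    have "0 = (\<integral>\<eta>. G (\<lambda>\<eta>. min (lin wv \<eta>) ?M) \<eta> \<partial>\<mu>)" using gmz by simp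
    also have "\<dots> \<le> (\<integral>\<eta>. (if lin wv \<eta> < ?M then G (lin wv) \<eta> else 0) \<partial>\<mu>)"
      using gmz by (intro integral_mono_AE[OF _ if_int]) (blast,
        rule AE_pmfI, rule G_min_le[where v=wv], use supp_S in blast)
    also have "\<dots> \<le> (\<integral>\<eta>. Rv wv - f m \<eta> \<partial>\<mu>)"
      by (rule integral_mono_AE[OF if_int]) (use rf_int G_w Rv_w_nonneg in \<open>auto simp: f_def intro!: AE_pmfI\<close>)
    also have "\<dots> = Rv wv - (\<integral>\<eta>. f m \<eta> \<partial>\<mu>)" using f_int by simp
    finally show ?thesis by simp
  qed
  have f_int: "integrable \<mu> (f m)" for m
    by (rule fin_integrable[OF finite_lev[where v=wv, OF c wv_ge1, of "real m"]]) (auto simp: f_def)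
  have f0: "0 \<le> f m \<eta>" for m \<eta> by (simp add: f_def nn_nonneg)
  have sup: "(SUP m. ennreal (f m \<eta>)) = ennreal (nn \<eta>)" for \<eta>
  proof (rule antisym)
    show "(SUP m. ennreal (f m \<eta>)) \<le> ennreal (nn \<eta>)"
      by (rule SUP_least) (auto simp: f_def nn_nonneg)
    have "lin wv \<eta> < real (nat \<lceil>lin wv \<eta>\<rceil> + 1)" by linarith
    then have "ennreal (nn \<eta>) = ennreal (f (nat \<lceil>lin wv \<eta>\<rceil> + 1) \<eta>)" by (simp add: f_def)
    also have "\<dots> \<le> (SUP m. ennreal (f m \<eta>))" by (rule SUP_upper) simp
    finally show "ennreal (nn \<eta>) \<le> (SUP m. ennreal (f m \<eta>))" .
  qed
  have inc: "incseq (\<lambda>m \<eta>. ennreal (f m \<eta>))"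
    by (rule incseq_SucI, rule le_funI) (auto simp: f_def nn_nonneg)
  have "(\<integral>\<^sup>+ \<eta>. ennreal (nn \<eta>) \<partial>\<mu>) = (\<integral>\<^sup>+ \<eta>. (SUP m. ennreal (f m \<eta>)) \<partial>\<mu>)" by (simp add: sup)
  also have "\<dots> = (SUP m. \<integral>\<^sup>+ \<eta>. ennreal (f m \<eta>) \<partial>\<mu>)"
    by (rule nn_integral_monotone_convergence_SUP[OF inc]) simp
  also have "\<dots> \<le> ennreal (Rv wv)"
  proof (rule SUP_least)
    fix m
    have "(\<integral>\<^sup>+ \<eta>. ennreal (f m \<eta>) \<partial>\<mu>) = ennreal (\<integral>\<eta>. f m \<eta> \<partial>\<mu>)"
      by (rule nn_integral_eq_integral[OF f_int]) (simp add: f0)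
    also have "\<dots> \<le> ennreal (Rv wv)" using bnd by (simp add: ennreal_leI)
    finally show "(\<integral>\<^sup>+ \<eta>. ennreal (f m \<eta>) \<partial>\<mu>) \<le> ennreal (Rv wv)" .
  qed
  also have "\<dots> < \<infinity>" by simp
  finally show ?thesis by (intro integrableI_nonneg) (auto simp: nn_nonneg)
qed

lemma coord_integrable:
  assumes "x \<in> {1..N}" "i \<in> {0, 1}"
  shows "integrable \<mu> (\<lambda>\<eta>. real (\<eta> (x, i)))"
proof (rule Bochner_Integration.integrable_bound[OF nn_integrable])
  show "(\<lambda>\<eta>. real (\<eta> (x, i))) \<in> borel_measurable (measure_pmf \<mu>)" by simp
  have "1 * real (\<eta> (x, i)) \<le> lin (\<lambda>_. 1) \<eta>" for \<eta>
    by (rule lin_ge[where v="\<lambda>_. 1", OF _ assms]) simp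
  then show "AE \<eta> in measure_pmf \<mu>. norm (real (\<eta> (x, i))) \<le> norm (nn \<eta>)"
    using nn_nonneg by (auto simp: nn_def)
qed

end

lemma sum_list_abs_le: "\<bar>sum_list (xs :: real list)\<bar> \<le> sum_list (map abs xs)"
  by (induction xs) (auto intro: order_trans[OF abs_triangle_ineq])

lemma Aop_diff: "Aop N eps gam (\<lambda>p. f p - g p) x i = Aop N eps gam f x i - Aop N eps gam g x i"
  by (simp add: Aop_def algebra_simps)

context bds begin

definition \<theta> :: "nat \<times> nat \<Rightarrow> real" where "\<theta> p = (\<integral>\<eta>. real (\<eta> p) \<partial>\<mu>)"

definition cc :: "nat \<Rightarrow> nat \<Rightarrow> real" where
  "cc x i = Aop N eps gam \<theta> x i + (if x = 1 then \<rho> L i else 0) + (if x = N then \<rho> R i else 0)"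

definition ell :: "(nat \<times> nat \<Rightarrow> real) \<Rightarrow> real" where
  "ell v = (\<Sum>x\<in>{1..N}. v (x, 0) * cc x 0 + v (x, 1) * cc x 1)"

lemma G_lin_vertex: "G (lin v) \<eta> = (\<Sum>x\<in>{1..N}. real (\<eta> (x, 0)) * Aop N eps gam v x 0 + real (\<eta> (x, 1)) * Aop N eps gam v x 1) + Rv v"
  unfolding G_lin vertex_form[OF N] ..

lemma G_lin_integrable: "integrable \<mu> (G (lin v))"
  unfolding G_lin_vertex
  by (intro Bochner_Integration.integrable_add Bochner_Integration.integrable_sum
      integrable_mult_left coord_integrable measure_pmf.integrable_const) auto

lemma Rv_expand: "Rv v = (\<Sum>x\<in>{1..N}. v (x, 0) * ((if x = 1 then \<rho> L 0 else 0) + (if x = N then \<rho> R 0 else 0))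
    + v (x, 1) * ((if x = 1 then \<rho> L 1 else 0) + (if x = N then \<rho> R 1 else 0)))"
proof -
  have "(\<Sum>x\<in>{1..N}. v (x, 0) * ((if x = 1 then \<rho> L 0 else 0) + (if x = N then \<rho> R 0 else 0))
    + v (x, 1) * ((if x = 1 then \<rho> L 1 else 0) + (if x = N then \<rho> R 1 else 0)))
    = (\<Sum>x\<in>{1..N}. v (x, 0) * (if x = 1 then \<rho> L 0 else 0) + v (x, 0) * (if x = N then \<rho> R 0 else 0)
       + v (x, 1) * (if x = 1 then \<rho> L 1 else 0) + v (x, 1) * (if x = N then \<rho> R 1 else 0))"
    by (simp add: algebra_simps)
  also have "\<dots> = Rv v" unfolding sum.distrib using N by (simp add: sum_if_at Rv_def)
  finally show ?thesis by simp
qed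

lemma EG_ell: "(\<integral>\<eta>. G (lin v) \<eta> \<partial>\<mu>) = ell v"
proof -
  let ?f = "\<lambda>x \<eta>. real (\<eta> (x, 0)) * Aop N eps gam v x 0 + real (\<eta> (x, 1)) * Aop N eps gam v x 1"
  have fi: "integrable \<mu> (?f x)" if "x \<in> {1..N}" for x
    using that by (intro Bochner_Integration.integrable_add integrable_mult_left coord_integrable) auto
  have i1: "integrable \<mu> (\<lambda>\<eta>. \<Sum>x\<in>{1..N}. ?f x \<eta>)" using fi by (intro Bochner_Integration.integrable_sum) auto
  have fe: "(\<integral>\<eta>. ?f x \<eta> \<partial>\<mu>) = \<theta> (x, 0) * Aop N eps gam v x 0 + \<theta> (x, 1) * Aop N eps gam v x 1" if "x \<in> {1..N}" for x
  proof -
    have a: "integrable \<mu> (\<lambda>\<eta>. real (\<eta> (x, 0)) * Aop N eps gam v x 0)" using that by (intro integrable_mult_left coord_integrable) auto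
    have b: "integrable \<mu> (\<lambda>\<eta>. real (\<eta> (x, 1)) * Aop N eps gam v x 1)" using that by (intro integrable_mult_left coord_integrable) auto
    show ?thesis unfolding \<theta>_def Bochner_Integration.integral_add[OF a b] by simp
  qed
  have s0: "(\<integral>\<eta>. G (lin v) \<eta> \<partial>\<mu>) = (\<integral>\<eta>. (\<Sum>x\<in>{1..N}. ?f x \<eta>) \<partial>\<mu>) + Rv v"
    unfolding G_lin_vertex by (subst Bochner_Integration.integral_add[OF i1 measure_pmf.integrable_const]) simp
  have s1: "(\<integral>\<eta>. (\<Sum>x\<in>{1..N}. ?f x \<eta>) \<partial>\<mu>) = (\<Sum>x\<in>{1..N}. \<integral>\<eta>. ?f x \<eta> \<partial>\<mu>)"
    by (rule Bochner_Integration.integral_sum) (rule fi)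
  have s2: "(\<Sum>x\<in>{1..N}. \<integral>\<eta>. ?f x \<eta> \<partial>\<mu>) = (\<Sum>x\<in>{1..N}. \<theta> (x, 0) * Aop N eps gam v x 0 + \<theta> (x, 1) * Aop N eps gam v x 1)"
    by (rule sum.cong[OF refl fe])
  have "(\<integral>\<eta>. G (lin v) \<eta> \<partial>\<mu>) = (\<Sum>x\<in>{1..N}. \<theta> (x, 0) * Aop N eps gam v x 0 + \<theta> (x, 1) * Aop N eps gam v x 1) + Rv v"
    unfolding s0 s1 s2 ..
  also have "\<dots> = Eform N eps gam v \<theta> + Rv v" unfolding vertex_form[OF N] ..
  also have "\<dots> = Eform N eps gam \<theta> v + Rv v" by (simp add: Eform_sym)
  also have "\<dots> = ell v" unfolding vertex_form[OF N] Rv_expand ell_def cc_def sum.distrib[symmetric]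
    by (rule sum.cong) (auto simp: algebra_simps)
  finally show ?thesis .
qed

lemma ell_nonneg:
  assumes c: "0 < c" and v: "\<And>y j. y \<in> {1..N} \<Longrightarrow> j \<in> {0, 1} \<Longrightarrow> c \<le> v (y, j)"
  shows "0 \<le> ell v"
proof -
  define s where "s m \<eta> = (if lin v \<eta> < real m then G (lin v) \<eta> else 0)" for m :: nat and \<eta>
  have gmz: "integrable \<mu> (G (\<lambda>\<eta>. min (lin v \<eta>) M)) \<and> (\<integral>\<eta>. G (\<lambda>\<eta>. min (lin v \<eta>) M) \<eta> \<partial>\<mu>) = 0" for M
    using G_min_zero[where v=v and M=M, OF c] v by blast
  have s_int: "integrable \<mu> (s m)" for m
  proof (rule fin_integrable)
    show "finite {\<eta> \<in> S. lin v \<eta> < real m}" using finite_lev[where v=v and M="real m", OF c] v by blast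
  qed (auto simp: s_def)
  have s0: "0 \<le> (\<integral>\<eta>. s m \<eta> \<partial>\<mu>)" for m
  proof -
    have "0 = (\<integral>\<eta>. G (\<lambda>\<eta>. min (lin v \<eta>) (real m)) \<eta> \<partial>\<mu>)" using gmz by simp
    also have "\<dots> \<le> (\<integral>\<eta>. s m \<eta> \<partial>\<mu>)"
      using gmz unfolding s_def
      by (intro integral_mono_AE[OF _ s_int[unfolded s_def]]) (blast, rule AE_pmfI, rule G_min_le[where v=v], use supp_S in blast)
    finally show ?thesis .
  qed
  have lim: "(\<lambda>m. \<integral>\<eta>. s m \<eta> \<partial>\<mu>) \<longlonglongrightarrow> (\<integral>\<eta>. G (lin v) \<eta> \<partial>\<mu>)"
  proof (rule integral_dominated_convergence[where w="\<lambda>\<eta>. \<bar>G (lin v) \<eta>\<bar>"])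
    show "integrable \<mu> (\<lambda>\<eta>. \<bar>G (lin v) \<eta>\<bar>)" using G_lin_integrable by simp
    show "AE \<eta> in \<mu>. (\<lambda>m. s m \<eta>) \<longlonglongrightarrow> G (lin v) \<eta>"
    proof (rule AE_pmfI, rule tendsto_eventually)
      fix \<eta>
      show "\<forall>\<^sub>F m in sequentially. s m \<eta> = G (lin v) \<eta>"
        unfolding eventually_sequentially
        by (rule exI[of _ "nat \<lceil>lin v \<eta>\<rceil> + 1"]) (auto simp: s_def, linarith)
    qed
    show "\<And>m. AE \<eta> in \<mu>. norm (s m \<eta>) \<le> \<bar>G (lin v) \<eta>\<bar>" by (auto simp: s_def)
  qed simp_all
  have "0 \<le> (\<integral>\<eta>. G (lin v) \<eta> \<partial>\<mu>)" using lim s0 by (intro LIMSEQ_le_const) auto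
  then show ?thesis using EG_ell by simp
qed

end

context bds begin

lemma entry_le:
  assumes "(r, \<zeta>) \<in> set (T \<eta>)"
  shows "nn \<zeta> \<le> nn \<eta> + 1"
  using assms
proof (cases rule: T_cases)
  case (hf x i) then show ?thesis by (simp add: nn_def lin_movep)
next
  case (hb x i) then show ?thesis by (simp add: nn_def lin_movep)
next
  case (s x i) then show ?thesis by (auto simp: nn_def lin_movep)
next
  case (rl i) then show ?thesis using N by (simp add: nn_def lin_remp)
next
  case (al i) then show ?thesis using N by (simp add: nn_def lin_addp)
next
  case (rr i) then show ?thesis using N by (simp add: nn_def lin_remp)
next
  case (ar i) then show ?thesis using N by (simp add: nn_def lin_addp)
qed

definition Dform :: "config \<Rightarrow> real" where
  "Dform \<eta> = real (\<eta> (1, 0)) * (1 + of_int \<sigma> * \<rho> L 0) + \<rho> L 0 * (1 + of_int \<sigma> * real (\<eta> (1, 0)))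
    + real (\<eta> (N, 0)) * (1 + of_int \<sigma> * \<rho> R 0) + \<rho> R 0 * (1 + of_int \<sigma> * real (\<eta> (N, 0)))
    + real (\<eta> (1, 1)) * (1 + of_int \<sigma> * \<rho> L 1) + \<rho> L 1 * (1 + of_int \<sigma> * real (\<eta> (1, 1)))
    + real (\<eta> (N, 1)) * (1 + of_int \<sigma> * \<rho> R 1) + \<rho> R 1 * (1 + of_int \<sigma> * real (\<eta> (N, 1)))"

lemma D_eq: "sum_list (map (\<lambda>(r, \<zeta>). r * \<bar>nn \<zeta> - nn \<eta>\<bar>) (T \<eta>)) = Dform \<eta>"
proof -
  let ?F = "\<lambda>(r, \<zeta>). r * \<bar>nn \<zeta> - nn \<eta>\<bar>"
  have hop: "?F (hopF \<eta> x 0) + ?F (hopB \<eta> x 0) + ?F (hopF \<eta> x 1) + ?F (hopB \<eta> x 1) = 0" if "x \<in> {1..<N}" for x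
    using that by (simp add: hopF_def hopB_def nn_def lin_movep)
  have swp: "?F (sw \<eta> x 0) + ?F (sw \<eta> x 1) = 0" if "x \<in> {1..N}" for x
    using that by (simp add: sw_def nn_def lin_movep)
  have bd: "?F (rL \<eta> 0) + ?F (aL \<eta> 0) + ?F (rR \<eta> 0) + ?F (aR \<eta> 0) + ?F (rL \<eta> 1) + ?F (aL \<eta> 1) + ?F (rR \<eta> 1) + ?F (aR \<eta> 1)
     = Dform \<eta>"
    using N by (simp add: rL_def aL_def rR_def aR_def Dform_def nn_def lin_remp lin_addp algebra_simps)
  show ?thesis
    unfolding trans_sum bd
    using sum.cong[OF refl hop, of "{1..<N}"] sum.cong[OF refl swp, of "{1..N}"]
    by simp
qed

lemma min_lip: "\<bar>min a M - min b M\<bar> \<le> \<bar>a - b\<bar>" for a b M :: real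
  by (auto simp: min_def)

lemma s_bound:
  assumes "\<eta> \<in> S"
  shows "\<bar>G (\<lambda>\<eta>. min (nn \<eta>) M) \<eta>\<bar> \<le> Dform \<eta>"
proof -
  have "\<bar>G (\<lambda>\<eta>. min (nn \<eta>) M) \<eta>\<bar> \<le> sum_list (map abs (map (\<lambda>(r, \<zeta>). r * (min (nn \<zeta>) M - min (nn \<eta>) M)) (T \<eta>)))"
    unfolding G_def by (rule sum_list_abs_le)
  also have "\<dots> \<le> sum_list (map (\<lambda>(r, \<zeta>). r * \<bar>nn \<zeta> - nn \<eta>\<bar>) (T \<eta>))"
    unfolding map_map
  proof (rule sum_list_mono)
    fix e assume e: "e \<in> set (T \<eta>)"
    obtain r \<zeta> where rz: "e = (r, \<zeta>)" by (cases e)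
    have r0: "0 \<le> r" using rate_nonneg[OF assms] e rz by blast
    show "(abs \<circ> (\<lambda>(r, \<zeta>). r * (min (nn \<zeta>) M - min (nn \<eta>) M))) e \<le> (\<lambda>(r, \<zeta>). r * \<bar>nn \<zeta> - nn \<eta>\<bar>) e"
      unfolding rz using r0 by (simp add: abs_mult mult_left_mono min_lip)
  qed
  also have "\<dots> = Dform \<eta>" by (rule D_eq)
  finally show ?thesis .
qed

lemma D_integrable: "integrable \<mu> Dform"
proof -
  have c: "integrable \<mu> (\<lambda>\<eta>. real (\<eta> (y, j)))" if "y = 1 \<or> y = N" "j \<in> {0, 1}" for y j
    using that N by (intro coord_integrable) auto
  show ?thesis unfolding Dform_def
    by (intro Bochner_Integration.integrable_add integrable_mult_left integrable_mult_right
        measure_pmf.integrable_const c) auto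
qed

lemma ell_one: "ell (\<lambda>_. 1) = 0"
proof -
  define s where "s m = G (\<lambda>\<eta>. min (nn \<eta>) (real m))" for m :: nat
  have c1: "0 < (1::real)" by simp
  have gmz: "integrable \<mu> (G (\<lambda>\<eta>. min (lin (\<lambda>_. 1) \<eta>) M)) \<and> (\<integral>\<eta>. G (\<lambda>\<eta>. min (lin (\<lambda>_. 1) \<eta>) M) \<eta> \<partial>\<mu>) = 0" for M
    using G_min_zero[where v="\<lambda>_. 1" and M=M, OF c1] by simp
  have s0: "(\<integral>\<eta>. s m \<eta> \<partial>\<mu>) = 0" for m using gmz unfolding s_def nn_def by simp
  have lim: "(\<lambda>m. \<integral>\<eta>. s m \<eta> \<partial>\<mu>) \<longlonglongrightarrow> (\<integral>\<eta>. G nn \<eta> \<partial>\<mu>)"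
  proof (rule integral_dominated_convergence[where w=Dform])
    show "integrable \<mu> Dform" by (rule D_integrable)
    show "AE \<eta> in \<mu>. (\<lambda>m. s m \<eta>) \<longlonglongrightarrow> G nn \<eta>"
    proof (rule AE_pmfI, rule tendsto_eventually)
      fix \<eta>
      have sm: "s m \<eta> = G nn \<eta>" if m: "nn \<eta> + 1 \<le> real m" for m
        unfolding s_def G_def
      proof (rule arg_cong[where f=sum_list], rule map_cong[OF refl])
        fix e assume e: "e \<in> set (T \<eta>)"
        obtain r \<zeta> where rz: "e = (r, \<zeta>)" by (cases e)
        have "nn \<zeta> \<le> real m" using entry_le[of r \<zeta> \<eta>] e rz m by auto
        then show "(case e of (r, \<zeta>) \<Rightarrow> r * (min (nn \<zeta>) (real m) - min (nn \<eta>) (real m))) =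
            (case e of (r, \<zeta>) \<Rightarrow> r * (nn \<zeta> - nn \<eta>))" using rz m by auto
      qed
      show "\<forall>\<^sub>F m in sequentially. s m \<eta> = G nn \<eta>"
        unfolding eventually_sequentially
      proof (intro exI[of _ "nat \<lceil>nn \<eta> + 1\<rceil>"] allI impI)
        fix n assume n: "nat \<lceil>nn \<eta> + 1\<rceil> \<le> n"
        have "nn \<eta> + 1 \<le> real (nat \<lceil>nn \<eta> + 1\<rceil>)" by (rule real_nat_ceiling_ge)
        also have "\<dots> \<le> real n" using n by simp
        finally show "s n \<eta> = G nn \<eta>" by (rule sm)
      qed
    qed
    show "AE \<eta> in \<mu>. norm (s m \<eta>) \<le> Dform \<eta>" for m
      using s_bound supp_S unfolding s_def by (auto intro!: AE_pmfI)
  qed simp_all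
  then have "(\<integral>\<eta>. G nn \<eta> \<partial>\<mu>) = 0" using s0 by (simp add: LIMSEQ_const_iff)
  then show ?thesis using EG_ell[of "\<lambda>_. 1"] by (simp add: nn_def)
qed

lemma cc_nonneg:
  assumes y: "y \<in> {1..N}" and j: "j \<in> {0, 1}"
  shows "0 \<le> cc y j"
proof -
  define v where "v p = 1 + (if p = (y, j) then 1 else (0::real))" for p
  have "0 \<le> ell v" by (rule ell_nonneg[where c=1]) (auto simp: v_def)
  moreover have "ell v = (\<Sum>x\<in>{1..N}. (cc x 0 + cc x 1) + (if x = y then cc y j else 0))"
    unfolding ell_def by (rule sum.cong) (use j in \<open>auto simp: v_def algebra_simps\<close>)
  moreover have "\<dots> = ell (\<lambda>_. 1) + cc y j"
    using y by (simp add: sum.distrib ell_def)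
  ultimately show ?thesis using ell_one by simp
qed

lemma cc_zero:
  assumes y: "y \<in> {1..N}" and j: "j \<in> {0, 1}"
  shows "cc y j = 0"
proof -
  have "(\<Sum>x\<in>{1..N}. cc x 0 + cc x 1) = 0" using ell_one by (simp add: ell_def)
  moreover have "\<forall>x\<in>{1..N}. 0 \<le> cc x 0 + cc x 1" using cc_nonneg by (auto intro!: add_nonneg_nonneg)
  moreover have "(\<Sum>x\<in>{1..N}. cc x 0 + cc x 1) = 0 \<longleftrightarrow> (\<forall>x\<in>{1..N}. cc x 0 + cc x 1 = 0)"
    by (rule sum_nonneg_eq_0_iff) (use calculation in auto)
  ultimately have "\<forall>x\<in>{1..N}. cc x 0 + cc x 1 = 0" by blast
  then have "cc y 0 + cc y 1 = 0" using y by blast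
  then show ?thesis using cc_nonneg[OF y, of 0] cc_nonneg[OF y, of 1] j by auto
qed

lemma theta_hh:
  assumes x: "x \<in> {1..N}" and i: "i \<in> {0, 1}"
  shows "\<theta> (x, i) = hh N eps gam \<rho> (x, i)"
proof -
  have "(\<lambda>p. \<theta> p - hh N eps gam \<rho> p) (x, i) = 0"
  proof (rule uniqueness[OF N eps(1) gam _ x i])
    fix y :: nat and j :: nat assume yj: "y \<in> {1..N}" "j \<in> {0, 1}"
    have "Aop N eps gam (hh N eps gam \<rho>) y j + (if y = 1 then \<rho> L j else 0) + (if y = N then \<rho> R j else 0) = 0"
      by (rule hh_eq[OF eps(1) gam yj(2)])
    moreover have "cc y j = 0" by (rule cc_zero[OF yj])
    ultimately show "Aop N eps gam (\<lambda>p. \<theta> p - hh N eps gam \<rho> p) y j = 0"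
      unfolding Aop_diff cc_def by linarith
  qed
  then show ?thesis by simp
qed

lemma final:
  assumes x: "x \<in> {1..N}" and i: "i \<in> {0, 1}"
  shows "(\<integral>\<^sup>+ \<eta>. ennreal (real (\<eta> (x, i))) \<partial>measure_pmf \<mu>) = ennreal (hh N eps gam \<rho> (x, i))"
proof -
  have "(\<integral>\<^sup>+ \<eta>. ennreal (real (\<eta> (x, i))) \<partial>measure_pmf \<mu>) = ennreal (\<theta> (x, i))"
    unfolding \<theta>_def by (rule nn_integral_eq_integral[OF coord_integrable[OF x i]]) simp
  then show ?thesis using theta_hh[OF x i] by simp
qed

end

theorem mainTheorem3:
  fixes \<sigma> :: int and N :: nat and eps gam :: real and \<rho> :: "side \<Rightarrow> nat \<Rightarrow> real"
    and \<mu> :: "config pmf"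
  assumes sigma: "\<sigma> \<in> {-1, 0, 1}"
    and N: "1 \<le> N"
    and eps: "0 \<le> eps" "eps \<le> 1"
    and gam: "0 < gam"
    and rho_nonneg: "\<And>b j. j \<in> {0, 1} \<Longrightarrow> 0 \<le> \<rho> b j"
    and rho_excl: "\<sigma> = -1 \<Longrightarrow> (\<And>b j. j \<in> {0, 1} \<Longrightarrow> \<rho> b j \<le> 1)"
    and stat: "stationary \<sigma> N eps gam \<rho> \<mu>"
    and x: "x \<in> {1..N}"
  shows "(\<integral>\<^sup>+ \<eta>. ennreal (real (\<eta> (x, 0))) \<partial>measure_pmf \<mu>)
           = ennreal (\<Sum>\<beta>\<in>{L, R}. \<Sum>j\<in>{0, 1}. phat N eps gam (In x 0) (Abs \<beta> j) * \<rho> \<beta> j)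
       \<and> (\<integral>\<^sup>+ \<eta>. ennreal (real (\<eta> (x, 1))) \<partial>measure_pmf \<mu>)
           = ennreal (\<Sum>\<beta>\<in>{L, R}. \<Sum>j\<in>{0, 1}. phat N eps gam (In x 1) (Abs \<beta> j) * \<rho> \<beta> j)"
proof -
  interpret bds \<sigma> N eps gam \<rho> \<mu>
  proof unfold_locales
    show "\<sigma> \<in> {-1, 0, 1}" by (rule sigma)
    show "1 \<le> N" by (rule N)
    show "0 \<le> eps" by (rule eps(1))
    show "eps \<le> 1" by (rule eps(2))
    show "0 < gam" by (rule gam)
    show "\<And>b j. j \<in> {0, 1} \<Longrightarrow> 0 \<le> \<rho> b j" by (rule rho_nonneg)
    show "\<And>b j. \<sigma> = -1 \<Longrightarrow> j \<in> {0, 1} \<Longrightarrow> \<rho> b j \<le> 1" by (rule rho_excl)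
    show "stationary \<sigma> N eps gam \<rho> \<mu>" by (rule stat)
  qed
  show ?thesis using final[OF x, of 0] final[OF x, of 1] by (simp add: hh_def)
qed

end
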